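(* For every integer $N>0$, \[\mathcal{F}_{(1)}(w_1,\dots,w_N)=\alpha^{N-1}\sum_{k=1}^N\frac{(1-q)^2w_k}{(1-w_k)(1-qw_k)}.\]
   Context: $q>0$, $q\ne1$, $\alpha\ge0$. $\mathcal{B}_N$ is the group of signed permutations of $\{1,\dots,N\}$ acting by $\sigma(f(w_1,\dots,w_N))=f(w_{\sigma(1)},\dots,w_{\sigma(N)})$ with $w_{-k}:=1/(qw_k)$. With $V_k=\frac{q^{\binom{k}{2}}(1-q)^k}{\prod_{i=1}^k(1-q^i)(1+q^{i-1})}$ and $\varphi_1(w)=\frac{1-q-\alpha+\alpha w}{1-qw^2}\frac{(1-q)w}{1-w}$, the function indexed by the one-particle configuration $(1)$ is \[\mathcal{F}_{(1)}(w_1,\dots,w_N)=V_{N-1}\alpha^{N-1}\sum_{\sigma\in\mathcal{B}_N}\sigma\!\left(\prod_{1\le i<j\le N}\left[\frac{w_i-qw_j}{w_i-w_j}\frac{1-w_iw_j}{1-qw_iw_j}\right]\varphi_1(w_1)\right).\] *)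

theory Defs
  imports "HOL-Analysis.Analysis" "HOL-Combinatorics.Permutations"
begin

text \<open>Signed permutations of {1..N}: a pair (p, s) with p a permutation of {1..N}
  and s a sign vector (True = negative sign), supported on {1..N}.
  Such a pair represents sigma(k) = p k if s k = False, and sigma(k) = - p k if s k = True.\<close>
definition signed_perms :: "nat \<Rightarrow> ((nat \<Rightarrow> nat) \<times> (nat \<Rightarrow> bool)) set" where
  "signed_perms N = {(p, s). p permutes {1..N} \<and> (\<forall>k. k \<notin> {1..N} \<longrightarrow> \<not> s k)}"

text \<open>The variable w_{sigma(k)}, with the convention w_{-k} = 1/(q w_k).\<close>
definition signed_var :: "real \<Rightarrow> (nat \<Rightarrow> complex) \<Rightarrow> (nat \<Rightarrow> nat) \<Rightarrow> (nat \<Rightarrow> bool) \<Rightarrow> nat \<Rightarrow> complex" where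
  "signed_var q w p s k = (if s k then 1 / (of_real q * w (p k)) else w (p k))"

definition V_const :: "real \<Rightarrow> nat \<Rightarrow> real" where
  "V_const q k = q ^ (k choose 2) * (1 - q) ^ k /
     (\<Prod>i = 1..k. (1 - q ^ i) * (1 + q ^ (i - 1)))"

definition phi1 :: "real \<Rightarrow> real \<Rightarrow> complex \<Rightarrow> complex" where
  "phi1 q \<alpha> w = (1 - of_real q - of_real \<alpha> + of_real \<alpha> * w) / (1 - of_real q * w ^ 2)
                  * ((1 - of_real q) * w / (1 - w))"

definition F_summand :: "real \<Rightarrow> real \<Rightarrow> nat \<Rightarrow> (nat \<Rightarrow> complex) \<Rightarrow> complex" where
  "F_summand q \<alpha> N z =
     (\<Prod>i\<in>{1..N}. \<Prod>j\<in>{i+1..N}.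
        (z i - of_real q * z j) / (z i - z j) * ((1 - z i * z j) / (1 - of_real q * z i * z j)))
     * phi1 q \<alpha> (z 1)"

definition F1 :: "real \<Rightarrow> real \<Rightarrow> nat \<Rightarrow> (nat \<Rightarrow> complex) \<Rightarrow> complex" where
  "F1 q \<alpha> N w = of_real (V_const q (N - 1) * \<alpha> ^ (N - 1)) *
     (\<Sum>(p, s)\<in>signed_perms N. F_summand q \<alpha> N (signed_var q w p s))"

end

theory Submission
  imports Defs
begin


definition fq :: "complex \<Rightarrow> complex \<Rightarrow> complex \<Rightarrow> complex" where
  "fq Q x y = (x - Q * y) / (x - y) * ((1 - x * y) / (1 - Q * x * y))"

definition rs :: "complex \<Rightarrow> complex \<Rightarrow> complex" where
  "rs Q p = p * (1 - Q) * (1 - p^2) / (1 - Q * p^2)"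

lemma rs_inv:
  assumes "Q \<noteq> 0" "y \<noteq> 0" "1 - Q * y^2 \<noteq> 0"
  shows "rs Q (1/(Q*y)) = (1 - Q^2*y^2)*(1-Q) / (Q^2*y*(1 - Q*y^2))"
proof -
  have a: "Q*y^2 - 1 \<noteq> 0" using assms by auto
  show ?thesis unfolding rs_def using assms a
    by (simp add: field_simps power2_eq_square)
qed

lemma fq_pf:
  assumes "Q \<noteq> 0" "y \<noteq> 0" "1 - Q * y^2 \<noteq> 0" "x \<noteq> y" "1 - Q * x * y \<noteq> 0"
  shows "fq Q x y = 1/Q + rs Q y / (x - y) + rs Q (1/(Q*y)) / (x - 1/(Q*y))"
proof -
  have h: "x - 1/(Q*y) = (Q*x*y - 1)/(Q*y)" using assms by (simp add: field_simps)
  have a: "Q*x*y - 1 \<noteq> 0" "x - y \<noteq> 0" "Q*y^2 - 1 \<noteq> 0" using assms by auto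
  show ?thesis unfolding h rs_inv[OF assms(1-3)] unfolding fq_def rs_def using assms a
    by (simp add: divide_simps) (simp add: algebra_simps power2_eq_square)
qed


lemma pt_ident:
  fixes c g0 gp r1 r2 x p a b D :: complex
  assumes "x \<noteq> p" "x \<noteq> a" "x \<noteq> b" "p \<noteq> a" "p \<noteq> b"
  shows "c * (D + r1/(x-a) + r2/(x-b)) / (x - p) =
         c * (D + r1/(p-a) + r2/(p-b)) / (x - p) + r1/(x-a) * (c/(a-p)) + r2/(x-b) * (c/(b-p))"
proof -
  have "x - p \<noteq> 0" "x - a \<noteq> 0" "x - b \<noteq> 0" "p - a \<noteq> 0" "p - b \<noteq> 0" "a - p \<noteq> 0" "b - p \<noteq> 0"
    using assms by auto
  then show ?thesis by (simp add: divide_simps) (simp add: algebra_simps)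
qed

lemma pf_step:
  fixes F g :: "complex \<Rightarrow> complex" and p0 p1 c0 c1 :: "nat \<Rightarrow> complex"
  assumes K: "finite K"
    and F: "\<And>x. x \<notin> p0`K \<union> p1`K \<Longrightarrow> F x = C + (\<Sum>k\<in>K. c0 k/(x - p0 k) + c1 k/(x - p1 k))"
    and g: "\<And>x. x \<noteq> a \<Longrightarrow> x \<noteq> b \<Longrightarrow> g x = D + r1/(x-a) + r2/(x-b)"
    and ab: "a \<notin> p0`K \<union> p1`K" "b \<notin> p0`K \<union> p1`K" "a \<noteq> b"
    and x: "x \<notin> p0`K \<union> p1`K" "x \<noteq> a" "x \<noteq> b"
  shows "F x * g x = C*D + (\<Sum>k\<in>K. c0 k * g (p0 k)/(x - p0 k) + c1 k * g (p1 k)/(x - p1 k))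
            + r1 * F a/(x-a) + r2 * F b/(x-b)"
proof -
  have gx: "g x = D + r1/(x-a) + r2/(x-b)" using g x by auto
  have e: "c0 k * g x/(x - p0 k) + c1 k * g x/(x - p1 k) =
     (c0 k * g (p0 k)/(x - p0 k) + c1 k * g (p1 k)/(x - p1 k))
     + r1/(x-a) * (c0 k/(a - p0 k) + c1 k/(a - p1 k)) + r2/(x-b) * (c0 k/(b - p0 k) + c1 k/(b - p1 k))"
    if k: "k \<in> K" for k
  proof -
    have n: "x \<noteq> p0 k" "x \<noteq> p1 k" "p0 k \<noteq> a" "p0 k \<noteq> b" "p1 k \<noteq> a" "p1 k \<noteq> b"
      using x ab k by auto
    have g0: "g (p0 k) = D + r1/(p0 k-a) + r2/(p0 k-b)" using g n by auto
    have g1: "g (p1 k) = D + r1/(p1 k-a) + r2/(p1 k-b)" using g n by auto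
    show ?thesis unfolding gx g0 g1
      using pt_ident[of x "p0 k" a b "c0 k" D r1 r2] pt_ident[of x "p1 k" a b "c1 k" D r1 r2] n x
      by (simp add: algebra_simps)
  qed
  have Fa: "(\<Sum>k\<in>K. c0 k/(a - p0 k) + c1 k/(a - p1 k)) = F a - C" using F[OF ab(1)] by simp
  have Fb: "(\<Sum>k\<in>K. c0 k/(b - p0 k) + c1 k/(b - p1 k)) = F b - C" using F[OF ab(2)] by simp
  have "F x * g x = C * g x + (\<Sum>k\<in>K. c0 k * g x/(x - p0 k) + c1 k * g x/(x - p1 k))"
    unfolding F[OF x(1)] by (simp add: algebra_simps sum_distrib_left sum_distrib_right sum.distrib)
  also have "\<dots> = C * g x + (\<Sum>k\<in>K. c0 k * g (p0 k)/(x - p0 k) + c1 k * g (p1 k)/(x - p1 k))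
     + r1/(x-a) * (\<Sum>k\<in>K. c0 k/(a - p0 k) + c1 k/(a - p1 k))
     + r2/(x-b) * (\<Sum>k\<in>K. c0 k/(b - p0 k) + c1 k/(b - p1 k))"
    apply (subst sum.cong[OF refl e], assumption)
    by (simp only: sum.distrib sum_distrib_left distrib_left add.assoc)
  also have "\<dots> = C*D + (\<Sum>k\<in>K. c0 k * g (p0 k)/(x - p0 k) + c1 k * g (p1 k)/(x - p1 k))
            + r1 * F a/(x-a) + r2 * F b/(x-b)"
    unfolding Fa Fb gx by (simp add: algebra_simps diff_divide_distrib add_divide_distrib)
  finally show ?thesis .
qed


definition pt :: "complex \<Rightarrow> (nat \<Rightarrow> complex) \<Rightarrow> nat \<Rightarrow> bool \<Rightarrow> complex" where
  "pt Q w k e = (if e then 1/(Q * w k) else w k)"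

definition cf :: "complex \<Rightarrow> (nat \<Rightarrow> complex) \<Rightarrow> nat set \<Rightarrow> nat \<Rightarrow> bool \<Rightarrow> complex" where
  "cf Q w K k e = (\<Prod>j\<in>K-{k}. fq Q (pt Q w k e) (w j)) * rs Q (pt Q w k e)"

definition good :: "complex \<Rightarrow> (nat \<Rightarrow> complex) \<Rightarrow> nat set \<Rightarrow> bool" where
  "good Q w K = (Q \<noteq> 0 \<and> (\<forall>k\<in>K. w k \<noteq> 0 \<and> w k \<noteq> 1 \<and> Q * w k \<noteq> 1 \<and> Q * (w k)^2 \<noteq> 1) \<and>
     (\<forall>i\<in>K. \<forall>j\<in>K. i \<noteq> j \<longrightarrow> w i \<noteq> w j \<and> Q * w i * w j \<noteq> 1))"

lemma good_mono: "good Q w K \<Longrightarrow> L \<subseteq> K \<Longrightarrow> good Q w L"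
  unfolding good_def by blast

lemma pf_thm:
  assumes "finite K" "good Q w K"
  shows "x \<notin> w`K \<union> (\<lambda>k. 1/(Q * w k))`K \<Longrightarrow> (\<Prod>j\<in>K. fq Q x (w j)) = (1/Q)^card K +
     (\<Sum>k\<in>K. cf Q w K k False / (x - w k) + cf Q w K k True / (x - 1/(Q * w k)))"
  using assms
proof (induction K arbitrary: x rule: finite_induct)
  case empty
  then show ?case by simp
next
  case (insert a K)
  have gK: "good Q w K" using insert.prems(2) good_mono by blast
  have Q: "Q \<noteq> 0" using gK good_def by auto
  have ga: "w a \<noteq> 0" "w a \<noteq> 1" "Q * w a \<noteq> 1" "Q * (w a)^2 \<noteq> 1"
    using insert.prems(2) unfolding good_def by auto
  have gak: "w a \<noteq> w k" "Q * w a * w k \<noteq> 1" if "k \<in> K" for k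
    using insert.prems(2) insert.hyps(2) that unfolding good_def by (metis insertCI)+
  have wk0: "w k \<noteq> 0" if "k \<in> K" for k using gK that unfolding good_def by auto
  define F where "F = (\<lambda>x. \<Prod>j\<in>K. fq Q x (w j))"
  define g where "g = (\<lambda>x. fq Q x (w a))"
  have Fe: "\<And>x. x \<notin> w`K \<union> (\<lambda>k. 1/(Q * w k))`K \<Longrightarrow> F x = (1/Q)^card K +
     (\<Sum>k\<in>K. cf Q w K k False / (x - w k) + cf Q w K k True / (x - 1/(Q * w k)))"
    unfolding F_def using insert.IH gK insert.hyps by blast
  have ge: "g x = 1/Q + rs Q (w a) / (x - w a) + rs Q (1/(Q*w a)) / (x - 1/(Q*w a))"
    if "x \<noteq> w a" "x \<noteq> 1/(Q * w a)" for x
    unfolding g_def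
  proof (rule fq_pf)
    show "1 - Q * x * w a \<noteq> 0" using that Q ga by (auto simp: field_simps)
  qed (use Q ga that in auto)
  have a1: "w a \<notin> w`K \<union> (\<lambda>k. 1/(Q * w k))`K"
  proof
    assume "w a \<in> w`K \<union> (\<lambda>k. 1/(Q * w k))`K"
    then obtain k where k: "k \<in> K" "w a = w k \<or> w a = 1/(Q * w k)" by auto
    then show False using gak[OF k(1)] wk0[OF k(1)] Q by (auto simp: field_simps)
  qed
  have a2: "1/(Q*w a) \<notin> w`K \<union> (\<lambda>k. 1/(Q * w k))`K"
  proof
    assume "1/(Q*w a) \<in> w`K \<union> (\<lambda>k. 1/(Q * w k))`K"
    then obtain k where k: "k \<in> K" "1/(Q*w a) = w k \<or> 1/(Q*w a) = 1/(Q * w k)" by auto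
    then show False using gak[OF k(1)] wk0[OF k(1)] Q ga by (auto simp: field_simps)
  qed
  have a3: "w a \<noteq> 1/(Q * w a)" using ga Q by (auto simp: field_simps power2_eq_square)
  have xK: "x \<notin> w`K \<union> (\<lambda>k. 1/(Q * w k))`K" "x \<noteq> w a" "x \<noteq> 1/(Q * w a)"
    using insert.prems(1) by auto
  note step = pf_step[OF insert.hyps(1) Fe ge a1 a2 a3 xK]
  have lhs: "(\<Prod>j\<in>insert a K. fq Q x (w j)) = F x * g x"
    using insert.hyps unfolding F_def g_def by (simp add: mult.commute)
  have cfa: "cf Q w (insert a K) a e = rs Q (pt Q w a e) * F (pt Q w a e)" for e
    unfolding cf_def F_def using insert.hyps by (simp add: mult.commute)
  have cfk: "cf Q w (insert a K) k e = cf Q w K k e * g (pt Q w k e)" if "k \<in> K" for k e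
  proof -
    have "insert a K - {k} = insert a (K - {k})" using that insert.hyps by auto
    then show ?thesis unfolding cf_def g_def using insert.hyps that
      by (simp add: prod.insert_remove algebra_simps)
  qed
  have seq: "(\<Sum>k\<in>insert a K. cf Q w (insert a K) k False / (x - w k) + cf Q w (insert a K) k True / (x - 1/(Q * w k)))
    = (\<Sum>k\<in>K. cf Q w K k False * g (w k) / (x - w k) + cf Q w K k True * g (1/(Q*w k)) / (x - 1/(Q * w k)))
     + rs Q (w a) * F (w a) / (x - w a) + rs Q (1/(Q*w a)) * F (1/(Q*w a)) / (x - 1/(Q*w a))"
    using insert.hyps by (simp add: cfa cfk pt_def)
  have "(\<Prod>j\<in>insert a K. fq Q x (w j)) = F x * g x" by (rule lhs)
  also have "\<dots> = (1/Q)^card K * (1/Q) + (\<Sum>k\<in>K. cf Q w K k False * g (w k) / (x - w k) + cf Q w K k True * g (1/(Q*w k)) / (x - 1/(Q * w k)))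
     + rs Q (w a) * F (w a) / (x - w a) + rs Q (1/(Q*w a)) * F (1/(Q*w a)) / (x - 1/(Q*w a))"
    by (rule step)
  also have "\<dots> = (1/Q)^card (insert a K) + (\<Sum>k\<in>insert a K. cf Q w (insert a K) k False / (x - w k) + cf Q w (insert a K) k True / (x - 1/(Q * w k)))"
    unfolding seq using insert.hyps by (simp add: algebra_simps)
  finally show ?case .
qed


definition SS :: "complex \<Rightarrow> (nat \<Rightarrow> complex) \<Rightarrow> nat set \<Rightarrow> (complex \<Rightarrow> complex) \<Rightarrow> complex" where
  "SS Q w K h = (\<Sum>k\<in>K. cf Q w K k False * h (w k) + cf Q w K k True * h (1/(Q * w k)))"

lemma SS_add: "SS Q w K (\<lambda>p. h1 p + h2 p) = SS Q w K h1 + SS Q w K h2"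
  unfolding SS_def by (simp add: sum.distrib algebra_simps)

lemma SS_mult: "SS Q w K (\<lambda>p. c * h p) = c * SS Q w K h"
  unfolding SS_def by (simp add: sum_distrib_left algebra_simps)

lemma SS_cong: "(\<And>k. k \<in> K \<Longrightarrow> h1 (w k) = h2 (w k) \<and> h1 (1/(Q * w k)) = h2 (1/(Q * w k)))
   \<Longrightarrow> SS Q w K h1 = SS Q w K h2"
  unfolding SS_def by (rule sum.cong) auto

definition pts :: "complex \<Rightarrow> (nat \<Rightarrow> complex) \<Rightarrow> nat set \<Rightarrow> complex set" where
  "pts Q w K = w`K \<union> (\<lambda>k. 1/(Q * w k))`K"

lemma pf_SS:
  assumes "finite K" "good Q w K" "x \<notin> pts Q w K"
  shows "(\<Prod>j\<in>K. fq Q x (w j)) = (1/Q)^card K + SS Q w K (\<lambda>p. 1/(x-p))"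
  using pf_thm[OF assms(1,2)] assms(3) unfolding SS_def pts_def by simp

lemma SS_insert:
  assumes "finite K" "a \<notin> K"
  shows "SS Q w (insert a K) h = SS Q w K (\<lambda>p. fq Q p (w a) * h p)
     + rs Q (w a) * (\<Prod>j\<in>K. fq Q (w a) (w j)) * h (w a)
     + rs Q (1/(Q*w a)) * (\<Prod>j\<in>K. fq Q (1/(Q*w a)) (w j)) * h (1/(Q*w a))"
proof -
  have cfa: "cf Q w (insert a K) a e = rs Q (pt Q w a e) * (\<Prod>j\<in>K. fq Q (pt Q w a e) (w j))" for e
    unfolding cf_def using assms by (simp add: mult.commute)
  have cfk: "cf Q w (insert a K) k e = cf Q w K k e * fq Q (pt Q w k e) (w a)" if "k \<in> K" for k e
  proof -
    have "insert a K - {k} = insert a (K - {k})" using that assms by auto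
    then show ?thesis unfolding cf_def using assms that
      by (simp add: prod.insert_remove algebra_simps)
  qed
  show ?thesis unfolding SS_def using assms
    by (simp add: cfa cfk pt_def algebra_simps cong: sum.cong)
qed


definition dd :: "complex \<Rightarrow> complex \<Rightarrow> complex" where
  "dd Q y = 2*(1-Q)*y/((1-y)*(1-Q*y))"

lemma fq_one: "y \<noteq> 1 \<Longrightarrow> Q*y \<noteq> 1 \<Longrightarrow> fq Q 1 y = 1"
proof -
  assume a: "y \<noteq> 1" "Q*y \<noteq> 1"
  have "1 - y \<noteq> 0" "1 - Q*y \<noteq> 0" using a by auto
  then show ?thesis unfolding fq_def by simp
qed

lemma fq_zero: "y \<noteq> 0 \<Longrightarrow> Q \<noteq> 0 \<Longrightarrow> fq Q 0 y = Q"
  unfolding fq_def by (simp add: field_simps)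

lemma fq_m1: "y \<noteq> -1 \<Longrightarrow> Q*y \<noteq> -1 \<Longrightarrow> fq Q (-1) y = 1"
proof -
  assume a: "y \<noteq> -1" "Q*y \<noteq> -1"
  have "1 + y \<noteq> 0" "1 + Q*y \<noteq> 0" using a by (metis add.inverse_inverse add_eq_0_iff)+
  then have "-1 - Q*y = - (1 + Q*y)" "-1 - y = -(1+y)" "1 - (-1) * y = 1 + y" "1 - Q * (-1) * y = 1 + Q*y" by simp_all
  then show ?thesis unfolding fq_def using \<open>1 + y \<noteq> 0\<close> \<open>1 + Q*y \<noteq> 0\<close> a
    by (simp add: divide_simps) (auto simp: algebra_simps)
qed

lemma rs_sum_one:
  assumes "Q \<noteq> 0" "y \<noteq> 0" "Q*y^2 \<noteq> 1" "y \<noteq> 1" "Q*y \<noteq> 1"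
  shows "1/Q + rs Q y / (1 - y) + rs Q (1/(Q*y)) / (1 - 1/(Q*y)) = 1"
proof -
  have "fq Q 1 y = 1/Q + rs Q y / (1 - y) + rs Q (1/(Q*y)) / (1 - 1/(Q*y))"
    by (rule fq_pf) (use assms in auto)
  then show ?thesis using fq_one[of y Q] assms by (metis (no_types, lifting))
qed

lemma rs_dd:
  assumes "Q \<noteq> 0" "y \<noteq> 0" "Q*y^2 \<noteq> 1" "y \<noteq> 1" "Q*y \<noteq> 1"
  shows "rs Q y / (1 - y)^2 + rs Q (1/(Q*y)) / (1 - 1/(Q*y))^2 = dd Q y"
proof -
  have a: "Q*y - 1 \<noteq> 0" "1 - y \<noteq> 0" "Q*y^2 - 1 \<noteq> 0" "1 - Q*y^2 \<noteq> 0" "1 - Q*y \<noteq> 0" using assms by auto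
  have t1: "rs Q y / (1 - y)^2 = y*(1-Q)*(1+y)/((1-Q*y^2)*(1-y))"
    unfolding rs_def using a by (simp add: divide_simps power2_eq_square) (simp add: algebra_simps)
  have h: "(1 - 1/(Q*y))^2 = (1 - Q*y)^2/(Q^2*y^2)" using assms by (simp add: field_simps power2_eq_square)
  have t2: "rs Q (1/(Q*y)) / (1 - 1/(Q*y))^2 = y*(1-Q)*(1+Q*y)/((1-Q*y^2)*(1-Q*y))"
    unfolding rs_inv[OF assms(1,2) a(4)] h using a assms by (simp add: divide_simps power2_eq_square) (simp add: algebra_simps)
  show ?thesis unfolding t1 t2 dd_def using a by (simp add: divide_simps power2_eq_square) (simp add: algebra_simps)
qed

lemma core_pf:
  fixes p a :: complex
  assumes "p \<noteq> a" "p \<noteq> 1" "a \<noteq> 1"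
  shows "1/(p-a) * (1/(1-p)^2) = (-(1/(1-a)^2)) * (1/(a-p)) + (1/(1-a)^2) * (1/(1-p)) + (1/(1-a)) * (1/(1-p)^2)"
proof -
  have "p - a \<noteq> 0" "1 - p \<noteq> 0" "1 - a \<noteq> 0" "a - p \<noteq> 0"
    using assms by auto
  then show ?thesis by (simp add: divide_simps) (simp add: algebra_simps power2_eq_square)
qed

lemma pp_ident:
  fixes p a b D0 r1 r2 :: complex
  assumes "p \<noteq> a" "p \<noteq> b" "p \<noteq> 1" "a \<noteq> 1" "b \<noteq> 1"
  shows "(D0 + r1/(p-a) + r2/(p-b)) * (1/(1-p)^2) =
    D0 * (1/(1-p)^2) + (r1 * ((-(1/(1-a)^2)) * (1/(a-p)) + (1/(1-a)^2) * (1/(1-p)) + (1/(1-a)) * (1/(1-p)^2))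
     + r2 * ((-(1/(1-b)^2)) * (1/(b-p)) + (1/(1-b)^2) * (1/(1-p)) + (1/(1-b)) * (1/(1-p)^2)))"
proof -
  have "(D0 + r1/(p-a) + r2/(p-b)) * (1/(1-p)^2) = D0*(1/(1-p)^2) + (r1 * (1/(p-a) * (1/(1-p)^2)) + r2 * (1/(p-b)*(1/(1-p)^2)))"
    by (simp only: distrib_right add.assoc) (simp add: divide_inverse mult.assoc)
  then show ?thesis unfolding core_pf[OF assms(1,3,4)] core_pf[OF assms(2,3,5)] .
qed




lemma good_Q: "good Q w K \<Longrightarrow> Q \<noteq> 0"
  unfolding good_def by simp

lemma good_1: "good Q w K \<Longrightarrow> k \<in> K \<Longrightarrow> w k \<noteq> 0 \<and> w k \<noteq> 1 \<and> Q * w k \<noteq> 1 \<and> Q * (w k)^2 \<noteq> 1"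
  unfolding good_def by simp

lemma good_2: "good Q w K \<Longrightarrow> i \<in> K \<Longrightarrow> j \<in> K \<Longrightarrow> i \<noteq> j \<Longrightarrow> w i \<noteq> w j \<and> Q * w i * w j \<noteq> 1"
  unfolding good_def by simp

lemma ne1: "x \<noteq> 1 \<Longrightarrow> 1 - x \<noteq> (0::complex)" by simp

lemma pts_facts:
  assumes "good Q w K" "k \<in> K" "p = w k \<or> p = 1/(Q * w k)"
  shows "p \<noteq> 0" "p \<noteq> 1" "1 - Q * p^2 \<noteq> 0" "1 - p \<noteq> 0"
proof -
  have g: "Q \<noteq> 0" "w k \<noteq> 0" "w k \<noteq> 1" "Q * w k \<noteq> 1" "Q * (w k)^2 \<noteq> 1"
    using good_Q[OF assms(1)] good_1[OF assms(1,2)] by simp_all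
  have "p \<noteq> 0 \<and> p \<noteq> 1 \<and> Q * p^2 \<noteq> 1"
    using assms(3)
  proof
    assume p: "p = w k"
    show ?thesis unfolding p using g(2,3,5) by blast
  next
    assume p: "p = 1/(Q * w k)"
    have e: "Q * p^2 = 1/(Q * (w k)^2)" unfolding p using g(1,2) by (simp add: power2_eq_square)
    have "1/(Q * (w k)^2) \<noteq> 1" using g(5) by (metis divide_eq_1_iff)
    moreover have "p \<noteq> 1" unfolding p using g(4) by (metis divide_eq_1_iff)
    moreover have "p \<noteq> 0" unfolding p using g(1,2) by simp
    ultimately show ?thesis unfolding e by blast
  qed
  then show "p \<noteq> 0" "p \<noteq> 1" "1 - Q * p^2 \<noteq> 0" "1 - p \<noteq> 0" using ne1 by blast+
qed

lemma pts_pair: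
  assumes "good Q w K" "k \<in> K" "a \<in> K" "k \<noteq> a" "p = w k \<or> p = 1/(Q * w k)"
  shows "p \<noteq> w a" "p \<noteq> 1/(Q * w a)" "1 - Q * p * w a \<noteq> 0"
proof -
  have g: "Q \<noteq> 0" "w k \<noteq> 0" "w a \<noteq> 0" "w k \<noteq> w a" "Q * w k * w a \<noteq> 1" "Q * w a * w k \<noteq> 1"
    using good_Q[OF assms(1)] good_1[OF assms(1,2)] good_1[OF assms(1,3)] good_2[OF assms(1,2,3,4)]
      good_2[OF assms(1,3,2)] assms(4) by simp_all
  have "p \<noteq> w a \<and> p \<noteq> 1/(Q * w a) \<and> Q * p * w a \<noteq> 1"
    using assms(5)
  proof
    assume p: "p = w k"
    have "w k \<noteq> 1/(Q * w a)"
    proof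
      assume "w k = 1/(Q * w a)"
      then have "w k * (Q * w a) = 1" using g(1,3) by simp
      then show False using g(5) by (simp add: mult_ac)
    qed
    then show ?thesis unfolding p using g(4,5) by blast
  next
    assume p: "p = 1/(Q * w k)"
    have "1/(Q * w k) \<noteq> w a"
    proof
      assume "1/(Q * w k) = w a"
      then have "w a * (Q * w k) = 1" using g(1,2) by (simp add: divide_eq_eq)
      then show False using g(6) by (simp add: mult_ac)
    qed
    moreover have "1/(Q * w k) \<noteq> 1/(Q * w a)" using g(1-4) by simp
    moreover have "Q * (1/(Q * w k)) * w a = w a / w k" using g(1,2) by simp
    moreover have "w a / w k \<noteq> 1" using g(2,4) by (metis divide_eq_1_iff)
    ultimately show ?thesis unfolding p by metis
  qed
  then show "p \<noteq> w a" "p \<noteq> 1/(Q * w a)" "1 - Q * p * w a \<noteq> 0" using ne1 by blast+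
qed

lemma new_pts:
  assumes "good Q w (insert a K)" "a \<notin> K"
  shows "w a \<notin> pts Q w K" "1/(Q * w a) \<notin> pts Q w K"
proof -
  have *: "p \<notin> pts Q w K" if p: "p = w a \<or> p = 1/(Q * w a)" for p
  proof
    assume "p \<in> pts Q w K"
    then obtain k where k: "k \<in> K" "p = w k \<or> p = 1/(Q * w k)" unfolding pts_def by auto
    have ka: "a \<noteq> k" using k(1) assms(2) by auto
    have "p \<noteq> w k" "p \<noteq> 1/(Q * w k)"
      using pts_pair(1,2)[OF assms(1) insertI1[of a K] insertI2[OF k(1)] ka p] by auto
    then show False using k(2) by auto
  qed
  show "w a \<notin> pts Q w K" by (rule *) simp
  show "1/(Q * w a) \<notin> pts Q w K" by (rule *) simp
qed

lemma one_notin: "good Q w K \<Longrightarrow> 1 \<notin> pts Q w K"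
proof
  assume g: "good Q w K" and "1 \<in> pts Q w K"
  then obtain k where k: "k \<in> K" "1 = w k \<or> 1 = 1/(Q * w k)" unfolding pts_def by auto
  from pts_facts(2)[OF g k(1), of 1] k(2) show False by auto
qed

lemma zero_notin: "good Q w K \<Longrightarrow> 0 \<notin> pts Q w K"
proof
  assume g: "good Q w K" and "0 \<in> pts Q w K"
  then obtain k where k: "k \<in> K" "0 = w k \<or> 0 = 1/(Q * w k)" unfolding pts_def by auto
  from pts_facts(1)[OF g k(1), of 0] k(2) show False by auto
qed

lemma prod_one_at1: "good Q w K \<Longrightarrow> (\<Prod>j\<in>K. fq Q 1 (w j)) = 1"
  by (rule prod.neutral) (auto simp: good_def intro!: fq_one)

lemma prod_at0: "good Q w K \<Longrightarrow> (\<Prod>j\<in>K. fq Q 0 (w j)) = Q ^ card K"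
  by (simp add: good_def fq_zero)

lemma final_alg:
  fixes D0 r1 r2 X X' Y Y' Dk dd Fa Fb C :: complex
  assumes "D0 = 1 - r1*X - r2*X'" "dd = r1*Y + r2*Y'"
  shows "D0*Dk + (r1*((-Y)*(Fa-C) + Y*(1-C) + X*Dk) + r2*((-Y')*(Fb-C) + Y'*(1-C) + X'*Dk)) + r1*Fa*Y + r2*Fb*Y' = Dk + dd"
  unfolding assms by (simp add: algebra_simps)


lemma pf_SS_at:
  assumes "finite K" "good Q w K" "x \<notin> pts Q w K"
  shows "SS Q w K (\<lambda>p. 1/(x-p)) = (\<Prod>j\<in>K. fq Q x (w j)) - (1/Q)^card K"
  using pf_SS[OF assms] by simp

lemma fq_pf_pt:
  assumes "good Q w (insert a K)" "a \<notin> K" "k \<in> K" "p = w k \<or> p = 1/(Q * w k)"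
  shows "fq Q p (w a) = 1/Q + rs Q (w a) / (p - w a) + rs Q (1/(Q*w a)) / (p - 1/(Q*w a))"
proof -
  have ka: "k \<noteq> a" using assms by auto
  note pp = pts_pair[OF assms(1) insertI2[OF assms(3)] insertI1 ka assms(4)]
  have g: "Q \<noteq> 0" "w a \<noteq> 0" "Q * (w a)^2 \<noteq> 1"
    using good_Q[OF assms(1)] good_1[OF assms(1) insertI1] by simp_all
  show ?thesis by (rule fq_pf) (use g pp ne1 in auto)
qed

lemma D_thm:
  assumes "finite K" "good Q w K"
  shows "SS Q w K (\<lambda>p. 1/(1-p)^2) = (\<Sum>k\<in>K. dd Q (w k))"
  using assms
proof (induction K rule: finite_induct)
  case empty
  then show ?case by (simp add: SS_def)
next
  case (insert a K)
  have gK: "good Q w K" using insert.prems good_mono by blast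
  have Qnz: "Q \<noteq> 0" using good_Q[OF gK] .
  have ga: "w a \<noteq> 0" "w a \<noteq> 1" "Q * w a \<noteq> 1" "Q * (w a)^2 \<noteq> 1"
    using good_1[OF insert.prems insertI1] by simp_all
  define a' where "a' = w a"
  define b' where "b' = 1/(Q * w a)"
  define r1 where "r1 = rs Q a'"
  define r2 where "r2 = rs Q b'"
  define Fa where "Fa = (\<Prod>j\<in>K. fq Q a' (w j))"
  define Fb where "Fb = (\<Prod>j\<in>K. fq Q b' (w j))"
  define C where "C = (1/Q)^card K"
  have a'1: "a' \<noteq> 1" unfolding a'_def using ga by simp
  have b'1: "b' \<noteq> 1" unfolding b'_def using ga(3) by (metis divide_eq_1_iff)
  have S1: "SS Q w (insert a K) (\<lambda>p. 1/(1-p)^2) = SS Q w K (\<lambda>p. fq Q p (w a) * (1/(1-p)^2))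
     + r1 * Fa * (1/(1-a')^2) + r2 * Fb * (1/(1-b')^2)"
    unfolding r1_def r2_def Fa_def Fb_def a'_def b'_def using SS_insert[OF insert.hyps] by simp
  have S2: "SS Q w K (\<lambda>p. fq Q p (w a) * (1/(1-p)^2)) = SS Q w K (\<lambda>p. (1/Q) * (1/(1-p)^2) +
      (r1 * ((-(1/(1-a')^2)) * (1/(a'-p)) + (1/(1-a')^2) * (1/(1-p)) + (1/(1-a')) * (1/(1-p)^2))
     + r2 * ((-(1/(1-b')^2)) * (1/(b'-p)) + (1/(1-b')^2) * (1/(1-p)) + (1/(1-b')) * (1/(1-p)^2))))"
  proof (rule SS_cong)
    fix k assume k: "k \<in> K"
    have "fq Q p (w a) * (1/(1-p)^2) = (1/Q) * (1/(1-p)^2) +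
      (r1 * ((-(1/(1-a')^2)) * (1/(a'-p)) + (1/(1-a')^2) * (1/(1-p)) + (1/(1-a')) * (1/(1-p)^2))
     + r2 * ((-(1/(1-b')^2)) * (1/(b'-p)) + (1/(1-b')^2) * (1/(1-p)) + (1/(1-b')) * (1/(1-p)^2)))"
      if p: "p = w k \<or> p = 1/(Q * w k)" for p
    proof -
      have ka: "k \<noteq> a" using k insert.hyps by auto
      note pp = pts_pair[OF insert.prems insertI2[OF k] insertI1 ka p]
      note pf = pts_facts[OF gK k p]
      show ?thesis unfolding fq_pf_pt[OF insert.prems insert.hyps(2) k p]
        unfolding r1_def r2_def a'_def b'_def
        by (rule pp_ident) (use pp pf a'1 b'1 in \<open>auto simp: a'_def b'_def\<close>)
    qed
    then show "fq Q (w k) (w a) * (1/(1-w k)^2) = (1/Q) * (1/(1-w k)^2) +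
      (r1 * ((-(1/(1-a')^2)) * (1/(a'-w k)) + (1/(1-a')^2) * (1/(1-w k)) + (1/(1-a')) * (1/(1-w k)^2))
     + r2 * ((-(1/(1-b')^2)) * (1/(b'-w k)) + (1/(1-b')^2) * (1/(1-w k)) + (1/(1-b')) * (1/(1-w k)^2))) \<and>
     fq Q (1/(Q * w k)) (w a) * (1/(1-1/(Q * w k))^2) = (1/Q) * (1/(1-1/(Q * w k))^2) +
      (r1 * ((-(1/(1-a')^2)) * (1/(a'-1/(Q * w k))) + (1/(1-a')^2) * (1/(1-1/(Q * w k))) + (1/(1-a')) * (1/(1-1/(Q * w k))^2))
     + r2 * ((-(1/(1-b')^2)) * (1/(b'-1/(Q * w k))) + (1/(1-b')^2) * (1/(1-1/(Q * w k))) + (1/(1-b')) * (1/(1-1/(Q * w k))^2)))"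
      by blast
  qed
  have S3: "SS Q w K (\<lambda>p. (1/Q) * (1/(1-p)^2) +
      (r1 * ((-(1/(1-a')^2)) * (1/(a'-p)) + (1/(1-a')^2) * (1/(1-p)) + (1/(1-a')) * (1/(1-p)^2))
     + r2 * ((-(1/(1-b')^2)) * (1/(b'-p)) + (1/(1-b')^2) * (1/(1-p)) + (1/(1-b')) * (1/(1-p)^2))))
     = (1/Q) * SS Q w K (\<lambda>p. 1/(1-p)^2) +
      (r1 * ((-(1/(1-a')^2)) * SS Q w K (\<lambda>p. 1/(a'-p)) + (1/(1-a')^2) * SS Q w K (\<lambda>p. 1/(1-p)) + (1/(1-a')) * SS Q w K (\<lambda>p. 1/(1-p)^2))
     + r2 * ((-(1/(1-b')^2)) * SS Q w K (\<lambda>p. 1/(b'-p)) + (1/(1-b')^2) * SS Q w K (\<lambda>p. 1/(1-p)) + (1/(1-b')) * SS Q w K (\<lambda>p. 1/(1-p)^2)))"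
    by (simp only: SS_add SS_mult)
  have Va: "SS Q w K (\<lambda>p. 1/(a'-p)) = Fa - C"
    unfolding Fa_def C_def a'_def by (rule pf_SS_at[OF insert.hyps(1) gK new_pts(1)[OF insert.prems insert.hyps(2)]])
  have Vb: "SS Q w K (\<lambda>p. 1/(b'-p)) = Fb - C"
    unfolding Fb_def C_def b'_def by (rule pf_SS_at[OF insert.hyps(1) gK new_pts(2)[OF insert.prems insert.hyps(2)]])
  have V1: "SS Q w K (\<lambda>p. 1/(1-p)) = 1 - C"
    unfolding C_def using pf_SS_at[OF insert.hyps(1) gK one_notin[OF gK]] prod_one_at1[OF gK] by simp
  have IH: "SS Q w K (\<lambda>p. 1/(1-p)^2) = (\<Sum>k\<in>K. dd Q (w k))" using insert.IH gK by blast
  have E1: "1/Q = 1 - r1 * (1/(1-a')) - r2 * (1/(1-b'))"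
    using rs_sum_one[OF Qnz ga(1) ga(4) ga(2) ga(3)] unfolding r1_def r2_def a'_def b'_def by (simp add: algebra_simps)
  have E2: "dd Q (w a) = r1 * (1/(1-a')^2) + r2 * (1/(1-b')^2)"
    using rs_dd[OF Qnz ga(1) ga(4) ga(2) ga(3)] unfolding r1_def r2_def a'_def b'_def by simp
  have "SS Q w (insert a K) (\<lambda>p. 1/(1-p)^2) = (\<Sum>k\<in>K. dd Q (w k)) + dd Q (w a)"
    unfolding S1 S2 S3 Va Vb V1 IH
    by (rule final_alg[OF E1 E2])
  then show ?case using insert.hyps by (simp add: add.commute)
qed


definition gen :: "complex \<Rightarrow> (nat \<Rightarrow> complex) \<Rightarrow> nat set \<Rightarrow> bool" where
  "gen Q w K = (\<forall>k\<in>K. w k \<noteq> -1 \<and> Q * w k \<noteq> -1)"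

definition phiQ :: "complex \<Rightarrow> complex \<Rightarrow> complex \<Rightarrow> complex" where
  "phiQ Q A p = (1 - Q - A + A * p) / (1 - Q * p^2) * ((1 - Q) * p / (1 - p))"

lemma gen_facts:
  assumes "good Q w K" "gen Q w K" "k \<in> K" "p = w k \<or> p = 1/(Q * w k)"
  shows "p \<noteq> -1"
proof -
  have g: "Q \<noteq> 0" "w k \<noteq> 0" "w k \<noteq> -1" "Q * w k \<noteq> -1"
    using good_Q[OF assms(1)] good_1[OF assms(1,3)] assms(2,3) unfolding gen_def by simp_all
  show ?thesis using assms(4)
  proof
    assume "p = 1/(Q * w k)"
    then show ?thesis using g(4) by (metis divide_eq_minus_1_iff minus_minus one_divide_eq_0_iff mult_minus_right)
  qed (use g in simp)
qed

lemma m1_notin: "good Q w K \<Longrightarrow> gen Q w K \<Longrightarrow> -1 \<notin> pts Q w K"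
proof
  assume g: "good Q w K" "gen Q w K" and "-1 \<in> pts Q w K"
  then obtain k where k: "k \<in> K" "-1 = w k \<or> -1 = 1/(Q * w k)" unfolding pts_def by auto
  from gen_facts[OF g k(1), of "-1"] k(2) show False by auto
qed

lemma prod_at_m1: "good Q w K \<Longrightarrow> gen Q w K \<Longrightarrow> (\<Prod>j\<in>K. fq Q (-1) (w j)) = 1"
  by (rule prod.neutral) (auto simp: gen_def intro!: fq_m1)

lemma rs_nz:
  assumes "Q \<noteq> 1" "p \<noteq> 0" "p \<noteq> 1" "p \<noteq> -1" "1 - Q * p^2 \<noteq> 0"
  shows "rs Q p \<noteq> 0"
proof -
  have "1 - p^2 \<noteq> 0"
  proof
    assume "1 - p^2 = 0"
    then have "(1 - p) * (1 + p) = 0" by (simp add: algebra_simps power2_eq_square)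
    then show False using assms(3,4) by (auto simp: add_eq_0_iff)
  qed
  moreover have "1 - Q \<noteq> 0" using assms(1) by simp
  ultimately show ?thesis unfolding rs_def using assms(2,5) by simp
qed

lemma SS_psi:
  assumes "good Q w K" "gen Q w K" "Q \<noteq> 1"
  shows "SS Q w K (\<lambda>p. \<psi> p / rs Q p) = (\<Sum>k\<in>K. \<psi> (w k) * (\<Prod>j\<in>K-{k}. fq Q (w k) (w j))
      + \<psi> (1/(Q * w k)) * (\<Prod>j\<in>K-{k}. fq Q (1/(Q * w k)) (w j)))"
  unfolding SS_def
proof (rule sum.cong[OF refl])
  fix k assume k: "k \<in> K"
  have nz: "rs Q p \<noteq> 0" if p: "p = w k \<or> p = 1/(Q * w k)" for p
    using rs_nz[OF assms(3) pts_facts(1,2)[OF assms(1) k p] gen_facts[OF assms(1,2) k p] pts_facts(3)[OF assms(1) k p]] .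
  show "cf Q w K k False * (\<psi> (w k) / rs Q (w k)) + cf Q w K k True * (\<psi> (1/(Q * w k)) / rs Q (1/(Q * w k))) =
     \<psi> (w k) * (\<Prod>j\<in>K-{k}. fq Q (w k) (w j)) + \<psi> (1/(Q * w k)) * (\<Prod>j\<in>K-{k}. fq Q (1/(Q * w k)) (w j))"
    unfolding cf_def pt_def using nz[of "w k"] nz[of "1/(Q * w k)"] by simp
qed

lemma sq_ne1:
  fixes p :: complex
  assumes "p \<noteq> 1" "p \<noteq> -1"
  shows "p * p \<noteq> 1" "1 - p^2 \<noteq> 0"
proof -
  show "p * p \<noteq> 1"
  proof
    assume "p * p = 1"
    then have "(1 - p) * (1 + p) = 0" by (simp add: algebra_simps)
    then show False using assms by (auto simp: add_eq_0_iff)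
  qed
  then show "1 - p^2 \<noteq> 0" by (simp add: power2_eq_square)
qed

lemma inv_rs_ident:
  assumes "Q \<noteq> 1" "p \<noteq> 0" "p \<noteq> 1" "p \<noteq> -1" "1 - Q * p^2 \<noteq> 0"
  shows "1 / rs Q p = (-(1/(1-Q))) * (1/(0-p)) + (1/2) * (1/(1-p)) + (1/2) * (1/(-1-p))"
proof -
  have "1 - Q \<noteq> 0" "1 - p \<noteq> 0" "1 + p \<noteq> 0" "-1 - p \<noteq> 0" using assms by (auto simp: add_eq_0_iff)
  then show ?thesis using sq_ne1[OF assms(3,4)] unfolding rs_def using assms
    by (simp add: divide_simps) (simp add: algebra_simps power2_eq_square)
qed

lemma phi_rs_ident:
  assumes "Q \<noteq> 1" "p \<noteq> 0" "p \<noteq> 1" "p \<noteq> -1" "1 - Q * p^2 \<noteq> 0"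
  shows "phiQ Q A p / rs Q p = (1-Q) * ((1/2) * (1/(1-p)^2) + (1/4) * (1/(1-p)) + (-(1/4)) * (1/(-1-p)))
     + ((-(A/2)) * (1/(1-p)) + (A/2) * (1/(-1-p)))"
proof -
  have "1 - Q \<noteq> 0" "1 - p \<noteq> 0" "1 + p \<noteq> 0" "-1 - p \<noteq> 0" using assms by (auto simp: add_eq_0_iff)
  then show ?thesis using sq_ne1[OF assms(3,4)] unfolding rs_def phiQ_def using assms
    by (simp add: divide_simps) (simp add: algebra_simps power2_eq_square)
qed


lemma pt_conds:
  assumes "good Q w K" "gen Q w K" "k \<in> K" "p = w k \<or> p = 1/(Q * w k)"
  shows "p \<noteq> 0" "p \<noteq> 1" "p \<noteq> -1" "1 - Q * p^2 \<noteq> 0"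
  using pts_facts[OF assms(1,3,4)] gen_facts[OF assms] by auto

lemma B0_gen:
  assumes "finite K" "good Q w K" "gen Q w K" "Q \<noteq> 1"
  shows "(\<Sum>k\<in>K. (\<Prod>j\<in>K-{k}. fq Q (w k) (w j)) + (\<Prod>j\<in>K-{k}. fq Q (1/(Q * w k)) (w j)))
     = ((1/Q)^card K - Q^card K)/(1-Q) + 1 - (1/Q)^card K"
proof -
  have "(\<Sum>k\<in>K. (\<Prod>j\<in>K-{k}. fq Q (w k) (w j)) + (\<Prod>j\<in>K-{k}. fq Q (1/(Q * w k)) (w j)))
      = SS Q w K (\<lambda>p. 1 / rs Q p)"
    using SS_psi[OF assms(2-4), of "\<lambda>_. 1"] by simp
  also have "\<dots> = SS Q w K (\<lambda>p. (-(1/(1-Q))) * (1/(0-p)) + (1/2) * (1/(1-p)) + (1/2) * (1/(-1-p)))"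
  proof (rule SS_cong)
    fix k assume k: "k \<in> K"
    show "1 / rs Q (w k) = (-(1/(1-Q))) * (1/(0-w k)) + (1/2) * (1/(1-w k)) + (1/2) * (1/(-1-w k)) \<and>
      1 / rs Q (1/(Q * w k)) = (-(1/(1-Q))) * (1/(0-1/(Q * w k))) + (1/2) * (1/(1-1/(Q * w k))) + (1/2) * (1/(-1-1/(Q * w k)))"
      using inv_rs_ident[OF assms(4) pt_conds[OF assms(2,3) k]] by blast
  qed
  also have "\<dots> = (-(1/(1-Q))) * SS Q w K (\<lambda>p. 1/(0-p)) + (1/2) * SS Q w K (\<lambda>p. 1/(1-p)) + (1/2) * SS Q w K (\<lambda>p. 1/(-1-p))"
    by (simp only: SS_add SS_mult)
  also have "\<dots> = (-(1/(1-Q))) * (Q^card K - (1/Q)^card K) + (1/2) * (1 - (1/Q)^card K) + (1/2) * (1 - (1/Q)^card K)"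
    using pf_SS_at[OF assms(1,2) zero_notin[OF assms(2)]] pf_SS_at[OF assms(1,2) one_notin[OF assms(2)]]
      pf_SS_at[OF assms(1,2) m1_notin[OF assms(2,3)]] prod_at0[OF assms(2)] prod_one_at1[OF assms(2)]
      prod_at_m1[OF assms(2,3)] by simp
  also have "\<dots> = ((1/Q)^card K - Q^card K)/(1-Q) + 1 - (1/Q)^card K"
    by (simp add: algebra_simps diff_divide_distrib)
  finally show ?thesis .
qed

lemma B1_gen:
  assumes "finite K" "good Q w K" "gen Q w K" "Q \<noteq> 1"
  shows "(\<Sum>k\<in>K. phiQ Q A (w k) * (\<Prod>j\<in>K-{k}. fq Q (w k) (w j))
      + phiQ Q A (1/(Q * w k)) * (\<Prod>j\<in>K-{k}. fq Q (1/(Q * w k)) (w j)))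
     = (\<Sum>k\<in>K. (1 - Q)^2 * w k / ((1 - w k) * (1 - Q * w k)))"
proof -
  have "(\<Sum>k\<in>K. phiQ Q A (w k) * (\<Prod>j\<in>K-{k}. fq Q (w k) (w j))
      + phiQ Q A (1/(Q * w k)) * (\<Prod>j\<in>K-{k}. fq Q (1/(Q * w k)) (w j)))
      = SS Q w K (\<lambda>p. phiQ Q A p / rs Q p)"
    using SS_psi[OF assms(2-4), of "phiQ Q A"] by simp
  also have "\<dots> = SS Q w K (\<lambda>p. (1-Q) * ((1/2) * (1/(1-p)^2) + (1/4) * (1/(1-p)) + (-(1/4)) * (1/(-1-p)))
     + ((-(A/2)) * (1/(1-p)) + (A/2) * (1/(-1-p))))"
  proof (rule SS_cong)
    fix k assume k: "k \<in> K"
    note e = phi_rs_ident[where A=A, OF assms(4) pt_conds[OF assms(2,3) k]]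
    show "phiQ Q A (w k) / rs Q (w k) = (1-Q) * ((1/2) * (1/(1-w k)^2) + (1/4) * (1/(1-w k)) + (-(1/4)) * (1/(-1-w k)))
     + ((-(A/2)) * (1/(1-w k)) + (A/2) * (1/(-1-w k))) \<and>
      phiQ Q A (1/(Q * w k)) / rs Q (1/(Q * w k)) = (1-Q) * ((1/2) * (1/(1-1/(Q * w k))^2) + (1/4) * (1/(1-1/(Q * w k))) + (-(1/4)) * (1/(-1-1/(Q * w k))))
     + ((-(A/2)) * (1/(1-1/(Q * w k))) + (A/2) * (1/(-1-1/(Q * w k))))"
      using e by blast
  qed
  also have "\<dots> = (1-Q) * ((1/2) * SS Q w K (\<lambda>p. 1/(1-p)^2) + (1/4) * SS Q w K (\<lambda>p. 1/(1-p)) + (-(1/4)) * SS Q w K (\<lambda>p. 1/(-1-p)))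
     + ((-(A/2)) * SS Q w K (\<lambda>p. 1/(1-p)) + (A/2) * SS Q w K (\<lambda>p. 1/(-1-p)))"
    by (simp only: SS_add SS_mult)
  also have "\<dots> = (1-Q) * ((1/2) * (\<Sum>k\<in>K. dd Q (w k)) + (1/4) * (1 - (1/Q)^card K) + (-(1/4)) * (1 - (1/Q)^card K))
     + ((-(A/2)) * (1 - (1/Q)^card K) + (A/2) * (1 - (1/Q)^card K))"
    using pf_SS_at[OF assms(1,2) one_notin[OF assms(2)]]
      pf_SS_at[OF assms(1,2) m1_notin[OF assms(2,3)]] prod_one_at1[OF assms(2)]
      prod_at_m1[OF assms(2,3)] D_thm[OF assms(1,2)] by simp
  also have "\<dots> = (\<Sum>k\<in>K. (1-Q)/2 * dd Q (w k))"
    by (simp add: algebra_simps sum_distrib_left)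
  also have "\<dots> = (\<Sum>k\<in>K. (1 - Q)^2 * w k / ((1 - w k) * (1 - Q * w k)))"
  proof (rule sum.cong[OF refl])
    fix k
    define D where "D = (1 - w k) * (1 - Q * w k)"
    have "(1-Q)/2 * (2*(1-Q)*w k/D) = (1-Q)^2 * w k / D"
      by (cases "D = 0") (simp_all add: field_simps power2_eq_square)
    then show "(1-Q)/2 * dd Q (w k) = (1-Q)^2 * w k / ((1 - w k) * (1 - Q * w k))"
      unfolding dd_def D_def .
  qed
  finally show ?thesis .
qed


lemma ev_ne:
  fixes h :: "'a \<Rightarrow> complex"
  assumes "(h \<longlongrightarrow> d) F" "d \<noteq> c"
  shows "eventually (\<lambda>x. h x \<noteq> c) F"
proof -
  have "open (-{c})" by (intro open_Compl closed_singleton)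
  then have "eventually (\<lambda>x. h x \<in> -{c}) F" using assms unfolding tendsto_def by auto
  then show ?thesis by simp
qed

lemma ev_pt_ne: "eventually (\<lambda>t. t \<noteq> z) (at (0::complex))"
  by (rule eventually_neq_at_within)

lemma ev_good_gen:
  assumes "finite K" "good Q w K"
  shows "eventually (\<lambda>t. good Q (\<lambda>k. w k + t) K \<and> gen Q (\<lambda>k. w k + t) K) (at (0::complex))"
proof -
  have Q: "Q \<noteq> 0" using good_Q[OF assms(2)] .
  have e1: "\<forall>k\<in>K. eventually (\<lambda>t. w k + t \<noteq> 0 \<and> w k + t \<noteq> 1 \<and> Q * (w k + t) \<noteq> 1
      \<and> Q * (w k + t)^2 \<noteq> 1) (at 0)"
  proof
    fix k assume k: "k \<in> K"
    note g = good_1[OF assms(2) k]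
    have l: "((\<lambda>t. w k + t) \<longlongrightarrow> w k + 0) (at 0)" by (intro tendsto_intros)
    have l2: "((\<lambda>t. Q * (w k + t)) \<longlongrightarrow> Q * (w k + 0)) (at 0)" by (intro tendsto_intros)
    have l3: "((\<lambda>t. Q * (w k + t)^2) \<longlongrightarrow> Q * (w k + 0)^2) (at 0)" by (intro tendsto_intros)
    have a1: "eventually (\<lambda>t. w k + t \<noteq> 0) (at 0)" using ev_ne[OF l, of 0] g by simp
    have a2: "eventually (\<lambda>t. w k + t \<noteq> 1) (at 0)" using ev_ne[OF l, of 1] g by simp
    have a3: "eventually (\<lambda>t. Q * (w k + t) \<noteq> 1) (at 0)" using ev_ne[OF l2, of 1] g by simp
    have a4: "eventually (\<lambda>t. Q * (w k + t)^2 \<noteq> 1) (at 0)" using ev_ne[OF l3, of 1] g by simp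
    show "eventually (\<lambda>t. w k + t \<noteq> 0 \<and> w k + t \<noteq> 1 \<and> Q * (w k + t) \<noteq> 1
      \<and> Q * (w k + t)^2 \<noteq> 1) (at 0)"
      using a1 a2 a3 a4 by eventually_elim (intro conjI, assumption+)
  qed
  have e1b: "\<forall>k\<in>K. eventually (\<lambda>t. w k + t \<noteq> -1 \<and> Q * (w k + t) \<noteq> -1) (at 0)"
  proof
    fix k assume k: "k \<in> K"
    have a: "eventually (\<lambda>t. w k + t \<noteq> -1) (at 0)"
      using ev_pt_ne[of "-1 - w k"]
    proof eventually_elim
      case (elim t)
      show ?case
      proof
        assume "w k + t = -1"
        then have "t = -1 - w k" by (simp add: algebra_simps)
        then show False using elim by simp
      qed
    qed
    have b: "eventually (\<lambda>t. Q * (w k + t) \<noteq> -1) (at 0)"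
      using ev_pt_ne[of "(-1 - Q * w k)/Q"]
    proof eventually_elim
      case (elim t)
      show ?case
      proof
        assume "Q * (w k + t) = -1"
        then have "t = (-1 - Q * w k)/Q" using Q by (simp add: field_simps)
        then show False using elim by simp
      qed
    qed
    show "eventually (\<lambda>t. w k + t \<noteq> -1 \<and> Q * (w k + t) \<noteq> -1) (at 0)"
      using a b by eventually_elim (intro conjI, assumption+)
  qed
  have e2: "\<forall>i\<in>K. eventually (\<lambda>t. \<forall>j\<in>K. i \<noteq> j \<longrightarrow> (w i + t \<noteq> w j + t \<and> Q * (w i + t) * (w j + t) \<noteq> 1)) (at 0)"
  proof
    fix i assume i: "i \<in> K"
    show "eventually (\<lambda>t. \<forall>j\<in>K. i \<noteq> j \<longrightarrow> (w i + t \<noteq> w j + t \<and> Q * (w i + t) * (w j + t) \<noteq> 1)) (at 0)"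
    proof (rule eventually_ball_finite[OF assms(1)], rule ballI)
      fix j assume j: "j \<in> K"
      show "eventually (\<lambda>t. i \<noteq> j \<longrightarrow> (w i + t \<noteq> w j + t \<and> Q * (w i + t) * (w j + t) \<noteq> 1)) (at 0)"
      proof (cases "i = j")
        case False
        note g = good_2[OF assms(2) i j False]
        have l: "((\<lambda>t. Q * (w i + t) * (w j + t)) \<longlongrightarrow> Q * (w i + 0) * (w j + 0)) (at 0)"
          by (intro tendsto_intros)
        have "eventually (\<lambda>t. Q * (w i + t) * (w j + t) \<noteq> 1) (at 0)"
          using ev_ne[OF l, of 1] g by simp
        then show ?thesis by eventually_elim (use g in simp)
      qed simp
    qed
  qed
  have E1: "eventually (\<lambda>t. \<forall>k\<in>K. w k + t \<noteq> 0 \<and> w k + t \<noteq> 1 \<and> Q * (w k + t) \<noteq> 1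
      \<and> Q * (w k + t)^2 \<noteq> 1) (at 0)"
    by (rule eventually_ball_finite[OF assms(1) e1])
  have E1b: "eventually (\<lambda>t. \<forall>k\<in>K. w k + t \<noteq> -1 \<and> Q * (w k + t) \<noteq> -1) (at 0)"
    by (rule eventually_ball_finite[OF assms(1) e1b])
  have E2: "eventually (\<lambda>t. \<forall>i\<in>K. \<forall>j\<in>K. i \<noteq> j \<longrightarrow> (w i + t \<noteq> w j + t \<and> Q * (w i + t) * (w j + t) \<noteq> 1)) (at 0)"
    by (rule eventually_ball_finite[OF assms(1) e2])
  show ?thesis using E1 E1b E2
  proof eventually_elim
    case (elim t)
    show ?case unfolding good_def gen_def
      by (intro conjI Q elim)
  qed
qed


lemma limit_eq:
  fixes f g :: "complex \<Rightarrow> complex"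
  assumes "(f \<longlongrightarrow> a) (at 0)" "(g \<longlongrightarrow> b) (at 0)" "eventually (\<lambda>t. f t = g t) (at 0)"
  shows "a = b"
proof -
  have "(g \<longlongrightarrow> a) (at 0)" using assms(1) tendsto_cong[OF assms(3)] by simp
  then show ?thesis using assms(2) tendsto_unique[OF at_neq_bot] by blast
qed

lemma fq_tendsto:
  assumes "(X \<longlongrightarrow> x) F" "(Y \<longlongrightarrow> y) F" "x \<noteq> y" "1 - Q*x*y \<noteq> 0"
  shows "((\<lambda>t. fq Q (X t) (Y t)) \<longlongrightarrow> fq Q x y) F"
  unfolding fq_def using assms by (auto intro!: tendsto_intros)

lemma prod_tendsto:
  assumes "good Q w K" "k \<in> K" "p = w k \<or> p = 1/(Q * w k)" "(X \<longlongrightarrow> p) (at 0)"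
  shows "((\<lambda>t. \<Prod>j\<in>K-{k}. fq Q (X t) (w j + t)) \<longlongrightarrow> (\<Prod>j\<in>K-{k}. fq Q p (w j))) (at (0::complex))"
proof (rule tendsto_prod)
  fix j assume j: "j \<in> K - {k}"
  note pp = pts_pair[OF assms(1,2) _ _ assms(3), of j]
  have Y: "((\<lambda>t. w j + t) \<longlongrightarrow> w j) (at (0::complex))"
    using tendsto_add[OF tendsto_const[of "w j"] tendsto_ident_at[of "0::complex" UNIV]] by simp
  show "((\<lambda>t. fq Q (X t) (w j + t)) \<longlongrightarrow> fq Q p (w j)) (at 0)"
    by (rule fq_tendsto[OF assms(4) Y]) (use pp j in auto)
qed

lemma pt_tendsto:
  assumes "good Q w K" "k \<in> K"
  shows "((\<lambda>t. w k + t) \<longlongrightarrow> w k) (at (0::complex))"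
    "((\<lambda>t. 1/(Q * (w k + t))) \<longlongrightarrow> 1/(Q * w k)) (at (0::complex))"
proof -
  show Y: "((\<lambda>t. w k + t) \<longlongrightarrow> w k) (at (0::complex))"
    using tendsto_add[OF tendsto_const[of "w k"] tendsto_ident_at[of "0::complex" UNIV]] by simp
  have "Q * w k \<noteq> 0" using good_Q[OF assms(1)] good_1[OF assms] by simp
  then show "((\<lambda>t. 1/(Q * (w k + t))) \<longlongrightarrow> 1/(Q * w k)) (at (0::complex))"
    by (intro tendsto_intros Y) 
qed

lemma B0_full:
  assumes "finite K" "good Q w K" "Q \<noteq> 1"
  shows "(\<Sum>k\<in>K. (\<Prod>j\<in>K-{k}. fq Q (w k) (w j)) + (\<Prod>j\<in>K-{k}. fq Q (1/(Q * w k)) (w j)))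
     = ((1/Q)^card K - Q^card K)/(1-Q) + 1 - (1/Q)^card K"
proof (rule limit_eq)
  show "((\<lambda>t. \<Sum>k\<in>K. (\<Prod>j\<in>K-{k}. fq Q (w k + t) (w j + t)) + (\<Prod>j\<in>K-{k}. fq Q (1/(Q * (w k + t))) (w j + t)))
     \<longlongrightarrow> (\<Sum>k\<in>K. (\<Prod>j\<in>K-{k}. fq Q (w k) (w j)) + (\<Prod>j\<in>K-{k}. fq Q (1/(Q * w k)) (w j)))) (at 0)"
  proof (rule tendsto_sum, rule tendsto_add)
    fix k assume k: "k \<in> K"
    show "((\<lambda>t. \<Prod>j\<in>K-{k}. fq Q (w k + t) (w j + t)) \<longlongrightarrow> (\<Prod>j\<in>K-{k}. fq Q (w k) (w j))) (at 0)"
      by (rule prod_tendsto[OF assms(2) k _ pt_tendsto(1)[OF assms(2) k]]) simp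
    show "((\<lambda>t. \<Prod>j\<in>K-{k}. fq Q (1/(Q * (w k + t))) (w j + t)) \<longlongrightarrow> (\<Prod>j\<in>K-{k}. fq Q (1/(Q * w k)) (w j))) (at 0)"
      by (rule prod_tendsto[OF assms(2) k _ pt_tendsto(2)[OF assms(2) k]]) simp
  qed
  show "((\<lambda>t. ((1/Q)^card K - Q^card K)/(1-Q) + 1 - (1/Q)^card K) \<longlongrightarrow> ((1/Q)^card K - Q^card K)/(1-Q) + 1 - (1/Q)^card K) (at 0)"
    by (rule tendsto_const)
  show "eventually (\<lambda>t. (\<Sum>k\<in>K. (\<Prod>j\<in>K-{k}. fq Q (w k + t) (w j + t)) + (\<Prod>j\<in>K-{k}. fq Q (1/(Q * (w k + t))) (w j + t)))
     = ((1/Q)^card K - Q^card K)/(1-Q) + 1 - (1/Q)^card K) (at 0)"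
    using ev_good_gen[OF assms(1,2)]
  proof eventually_elim
    case (elim t)
    show ?case using B0_gen[OF assms(1) conjunct1[OF elim] conjunct2[OF elim] assms(3)] by simp
  qed
qed

lemma B1_full:
  assumes "finite K" "good Q w K" "Q \<noteq> 1"
  shows "(\<Sum>k\<in>K. phiQ Q A (w k) * (\<Prod>j\<in>K-{k}. fq Q (w k) (w j))
      + phiQ Q A (1/(Q * w k)) * (\<Prod>j\<in>K-{k}. fq Q (1/(Q * w k)) (w j)))
     = (\<Sum>k\<in>K. (1 - Q)^2 * w k / ((1 - w k) * (1 - Q * w k)))"
proof (rule limit_eq)
  have phi_t: "((\<lambda>t. phiQ Q A (X t)) \<longlongrightarrow> phiQ Q A p) (at (0::complex))"
    if "(X \<longlongrightarrow> p) (at 0)" "k \<in> K" "p = w k \<or> p = 1/(Q * w k)" for X p k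
  proof -
    note pf = pts_facts[OF assms(2) that(2,3)]
    show ?thesis unfolding phiQ_def using pf that(1) by (auto intro!: tendsto_intros)
  qed
  show "((\<lambda>t. \<Sum>k\<in>K. phiQ Q A (w k + t) * (\<Prod>j\<in>K-{k}. fq Q (w k + t) (w j + t))
      + phiQ Q A (1/(Q * (w k + t))) * (\<Prod>j\<in>K-{k}. fq Q (1/(Q * (w k + t))) (w j + t)))
     \<longlongrightarrow> (\<Sum>k\<in>K. phiQ Q A (w k) * (\<Prod>j\<in>K-{k}. fq Q (w k) (w j))
      + phiQ Q A (1/(Q * w k)) * (\<Prod>j\<in>K-{k}. fq Q (1/(Q * w k)) (w j)))) (at 0)"
  proof (rule tendsto_sum, rule tendsto_add; rule tendsto_mult)
    fix k assume k: "k \<in> K"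
    show "((\<lambda>t. \<Prod>j\<in>K-{k}. fq Q (w k + t) (w j + t)) \<longlongrightarrow> (\<Prod>j\<in>K-{k}. fq Q (w k) (w j))) (at 0)"
      by (rule prod_tendsto[OF assms(2) k _ pt_tendsto(1)[OF assms(2) k]]) simp
    show "((\<lambda>t. \<Prod>j\<in>K-{k}. fq Q (1/(Q * (w k + t))) (w j + t)) \<longlongrightarrow> (\<Prod>j\<in>K-{k}. fq Q (1/(Q * w k)) (w j))) (at 0)"
      by (rule prod_tendsto[OF assms(2) k _ pt_tendsto(2)[OF assms(2) k]]) simp
    show "((\<lambda>t. phiQ Q A (w k + t)) \<longlongrightarrow> phiQ Q A (w k)) (at 0)"
      by (rule phi_t[OF pt_tendsto(1)[OF assms(2) k] k]) simp
    show "((\<lambda>t. phiQ Q A (1/(Q * (w k + t)))) \<longlongrightarrow> phiQ Q A (1/(Q * w k))) (at 0)"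
      by (rule phi_t[OF pt_tendsto(2)[OF assms(2) k] k]) simp
  qed
  show "((\<lambda>t. \<Sum>k\<in>K. (1 - Q)^2 * (w k + t) / ((1 - (w k + t)) * (1 - Q * (w k + t))))
     \<longlongrightarrow> (\<Sum>k\<in>K. (1 - Q)^2 * w k / ((1 - w k) * (1 - Q * w k)))) (at 0)"
  proof (rule tendsto_sum)
    fix k assume k: "k \<in> K"
    note g = good_1[OF assms(2) k]
    have "(1 - w k) * (1 - Q * w k) \<noteq> 0" using g by simp
    then show "((\<lambda>t. (1 - Q)^2 * (w k + t) / ((1 - (w k + t)) * (1 - Q * (w k + t))))
      \<longlongrightarrow> (1 - Q)^2 * w k / ((1 - w k) * (1 - Q * w k))) (at 0)"
      by (intro tendsto_intros pt_tendsto(1)[OF assms(2) k])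
  qed
  show "eventually (\<lambda>t. (\<Sum>k\<in>K. phiQ Q A (w k + t) * (\<Prod>j\<in>K-{k}. fq Q (w k + t) (w j + t))
      + phiQ Q A (1/(Q * (w k + t))) * (\<Prod>j\<in>K-{k}. fq Q (1/(Q * (w k + t))) (w j + t)))
     = (\<Sum>k\<in>K. (1 - Q)^2 * (w k + t) / ((1 - (w k + t)) * (1 - Q * (w k + t))))) (at 0)"
    using ev_good_gen[OF assms(1,2)]
  proof eventually_elim
    case (elim t)
    show ?case using B1_gen[OF assms(1) conjunct1[OF elim] conjunct2[OF elim] assms(3), of A] by simp
  qed
qed



definition SP :: "nat set \<Rightarrow> nat set \<Rightarrow> ((nat \<Rightarrow> nat) \<times> (nat \<Rightarrow> bool)) set" where
  "SP I M = {(p,s). bij_betw p I M \<and> (\<forall>i. i \<notin> I \<longrightarrow> p i = i) \<and> (\<forall>i. i \<notin> I \<longrightarrow> \<not> s i)}"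

lemma bij_upd:
  assumes "bij_betw p (I - {i0}) (M - {k})" "i0 \<in> I" "k \<in> M"
  shows "bij_betw (p(i0:=k)) I M"
proof -
  have "bij_betw (p(i0:=k)) (I - {i0}) (M - {k})"
    using assms(1) by (rule bij_betw_cong[THEN iffD1, rotated]) auto
  moreover have "bij_betw (p(i0:=k)) {i0} {k}" by simp
  ultimately have "bij_betw (p(i0:=k)) ((I - {i0}) \<union> {i0}) ((M - {k}) \<union> {k})"
    by (rule bij_betw_combine) auto
  moreover have "(I - {i0}) \<union> {i0} = I" "(M - {k}) \<union> {k} = M" using assms(2,3) by auto
  ultimately show ?thesis by simp
qed

lemma bij_rem:
  assumes "bij_betw p I M" "i0 \<in> I"
  shows "bij_betw (p(i0:=i0)) (I - {i0}) (M - {p i0})"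
proof -
  have "bij_betw p (I - {i0}) (M - {p i0})"
    by (rule bij_betw_DiffI[OF assms(1), of "{i0}"]) (use assms bij_betw_apply in auto)
  then show ?thesis by (rule bij_betw_cong[THEN iffD1, rotated]) auto
qed

lemma finite_SP:
  assumes "finite I" "finite M"
  shows "finite (SP I M)"
proof -
  let ?h = "\<lambda>(f::nat \<Rightarrow> nat, g::nat \<Rightarrow> bool). (\<lambda>i. if i \<in> I then f i else i, \<lambda>i. if i \<in> I then g i else False)"
  have "SP I M \<subseteq> ?h ` ((I \<rightarrow>\<^sub>E M) \<times> (I \<rightarrow>\<^sub>E (UNIV :: bool set)))"
  proof
    fix x assume x: "x \<in> SP I M"
    obtain p s where ps: "x = (p, s)" by (cases x)
    have b: "bij_betw p I M" and o1: "\<And>i. i \<notin> I \<Longrightarrow> p i = i" and o2: "\<And>i. i \<notin> I \<Longrightarrow> \<not> s i"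
      using x ps unfolding SP_def by auto
    have "(restrict p I, restrict s I) \<in> (I \<rightarrow>\<^sub>E M) \<times> (I \<rightarrow>\<^sub>E (UNIV :: bool set))"
      using bij_betw_apply[OF b] by auto
    moreover have "x = ?h (restrict p I, restrict s I)"
      unfolding ps using o1 o2 by (auto simp: fun_eq_iff)
    ultimately show "x \<in> ?h ` ((I \<rightarrow>\<^sub>E M) \<times> (I \<rightarrow>\<^sub>E (UNIV :: bool set)))" by blast
  qed
  moreover have "finite ((I \<rightarrow>\<^sub>E M) \<times> (I \<rightarrow>\<^sub>E (UNIV :: bool set)))"
    using assms by (intro finite_cartesian_product finite_PiE) auto
  ultimately show ?thesis using finite_subset by blast
qed

lemma SP_split:
  assumes "finite I" "finite M" "i0 \<in> I"
  shows "(\<Sum>x\<in>SP I M. f x) =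
    (\<Sum>k\<in>M. \<Sum>e\<in>(UNIV::bool set). \<Sum>y\<in>SP (I - {i0}) (M - {k}). f ((fst y)(i0:=k), (snd y)(i0:=e)))"
proof -
  define Sig where "Sig = (SIGMA k:M. SIGMA e:(UNIV::bool set). SP (I - {i0}) (M - {k}))"
  have fin: "finite (SP (I - {i0}) (M - {k}))" for k using finite_SP assms by auto
  have "(\<Sum>k\<in>M. \<Sum>e\<in>(UNIV::bool set). \<Sum>y\<in>SP (I - {i0}) (M - {k}). f ((fst y)(i0:=k), (snd y)(i0:=e)))
     = (\<Sum>k\<in>M. \<Sum>z\<in>(SIGMA e:(UNIV::bool set). SP (I - {i0}) (M - {k})). f ((fst (snd z))(i0:=k), (snd (snd z))(i0:=fst z)))"
    by (rule sum.cong[OF refl], subst sum.Sigma) (use fin in \<open>auto simp: split_beta\<close>)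
  also have "\<dots> = (\<Sum>z\<in>Sig. f ((fst (snd (snd z)))(i0:=fst z), (snd (snd (snd z)))(i0:=fst (snd z))))"
    unfolding Sig_def by (subst sum.Sigma) (use assms fin in \<open>auto simp: split_beta\<close>)
  also have "\<dots> = (\<Sum>x\<in>SP I M. f x)"
  proof (rule sum.reindex_bij_witness[where j = "\<lambda>z. ((fst (snd (snd z)))(i0:=fst z), (snd (snd (snd z)))(i0:=fst (snd z)))"
        and i = "\<lambda>x. (fst x (i0), snd x (i0), (fst x)(i0:=i0), (snd x)(i0:=False))"])
    fix z assume z: "z \<in> Sig"
    then obtain k e p s where zz: "z = (k, e, p, s)" and k: "k \<in> M" and ps: "(p, s) \<in> SP (I - {i0}) (M - {k})"
      unfolding Sig_def by auto
    have pi0: "p i0 = i0" "\<not> s i0" using ps unfolding SP_def by auto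
    show "(fst ((fst (snd (snd z)))(i0:=fst z), (snd (snd (snd z)))(i0:=fst (snd z))) i0,
           snd ((fst (snd (snd z)))(i0:=fst z), (snd (snd (snd z)))(i0:=fst (snd z))) i0,
           (fst ((fst (snd (snd z)))(i0:=fst z), (snd (snd (snd z)))(i0:=fst (snd z))))(i0:=i0),
           (snd ((fst (snd (snd z)))(i0:=fst z), (snd (snd (snd z)))(i0:=fst (snd z))))(i0:=False)) = z"
      unfolding zz using pi0 by (auto simp: fun_eq_iff)
    show "((fst (snd (snd z)))(i0:=fst z), (snd (snd (snd z)))(i0:=fst (snd z))) \<in> SP I M"
      unfolding zz using ps k assms(3) bij_upd unfolding SP_def by auto
    show "f ((fst (snd (snd z)))(i0:=fst z), (snd (snd (snd z)))(i0:=fst (snd z))) =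
          f ((fst (snd (snd z)))(i0:=fst z), (snd (snd (snd z)))(i0:=fst (snd z)))" ..
  next
    fix x assume x: "x \<in> SP I M"
    then obtain p s where xx: "x = (p, s)" and b: "bij_betw p I M" and o1: "\<forall>i. i \<notin> I \<longrightarrow> p i = i"
      and o2: "\<forall>i. i \<notin> I \<longrightarrow> \<not> s i"
      unfolding SP_def by auto
    show "((fst (snd (snd (fst x i0, snd x i0, (fst x)(i0 := i0), (snd x)(i0 := False)))))
           (i0 := fst (fst x i0, snd x i0, (fst x)(i0 := i0), (snd x)(i0 := False))),
          (snd (snd (snd (fst x i0, snd x i0, (fst x)(i0 := i0), (snd x)(i0 := False)))))
           (i0 := fst (snd (fst x i0, snd x i0, (fst x)(i0 := i0), (snd x)(i0 := False))))) = x"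
      unfolding xx by auto
    have "bij_betw (p(i0:=i0)) (I - {i0}) (M - {p i0})" by (rule bij_rem[OF b assms(3)])
    moreover have "p i0 \<in> M" using bij_betw_apply[OF b assms(3)] .
    ultimately show "(fst x i0, snd x i0, (fst x)(i0 := i0), (snd x)(i0 := False)) \<in> Sig"
      unfolding xx Sig_def SP_def using o1 o2 by auto
  qed
  finally show ?thesis by simp
qed


definition PP :: "complex \<Rightarrow> (nat \<Rightarrow> complex) \<Rightarrow> nat set \<Rightarrow> (nat \<Rightarrow> nat) \<Rightarrow> (nat \<Rightarrow> bool) \<Rightarrow> complex" where
  "PP Q w I p s = (\<Prod>i\<in>I. \<Prod>j\<in>{j\<in>I. i < j}. fq Q (pt Q w (p i) (s i)) (pt Q w (p j) (s j)))"

definition TT :: "complex \<Rightarrow> (nat \<Rightarrow> complex) \<Rightarrow> nat set \<Rightarrow> nat set \<Rightarrow> complex" where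
  "TT Q w I M = (\<Sum>x\<in>SP I M. PP Q w I (fst x) (snd x))"

lemma PP_split:
  assumes "finite I" "i0 \<in> I" "\<forall>i\<in>I. i0 \<le> i"
  shows "PP Q w I (p(i0:=k)) (s(i0:=e)) =
     (\<Prod>j\<in>I-{i0}. fq Q (pt Q w k e) (pt Q w (p j) (s j))) * PP Q w (I-{i0}) p s"
proof -
  have A: "{j\<in>I. i0 < j} = I - {i0}" using assms(3) by force
  have B: "{j\<in>I. i < j} = {j\<in>I-{i0}. i < j}" if "i \<in> I - {i0}" for i
    using assms(3) that by force
  have "PP Q w I (p(i0:=k)) (s(i0:=e)) =
    (\<Prod>j\<in>{j\<in>I. i0 < j}. fq Q (pt Q w ((p(i0:=k)) i0) ((s(i0:=e)) i0)) (pt Q w ((p(i0:=k)) j) ((s(i0:=e)) j))) *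
    (\<Prod>i\<in>I-{i0}. \<Prod>j\<in>{j\<in>I. i < j}. fq Q (pt Q w ((p(i0:=k)) i) ((s(i0:=e)) i)) (pt Q w ((p(i0:=k)) j) ((s(i0:=e)) j)))"
    unfolding PP_def by (rule prod.remove[OF assms(1,2)])
  also have "\<dots> = (\<Prod>j\<in>I-{i0}. fq Q (pt Q w k e) (pt Q w (p j) (s j))) * PP Q w (I-{i0}) p s"
  proof -
    have X: "(\<Prod>j\<in>{j\<in>I. i0 < j}. fq Q (pt Q w ((p(i0:=k)) i0) ((s(i0:=e)) i0)) (pt Q w ((p(i0:=k)) j) ((s(i0:=e)) j)))
      = (\<Prod>j\<in>I-{i0}. fq Q (pt Q w k e) (pt Q w (p j) (s j)))"
      unfolding A by (rule prod.cong) auto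
    have Y: "(\<Prod>i\<in>I-{i0}. \<Prod>j\<in>{j\<in>I. i < j}. fq Q (pt Q w ((p(i0:=k)) i) ((s(i0:=e)) i)) (pt Q w ((p(i0:=k)) j) ((s(i0:=e)) j)))
      = PP Q w (I-{i0}) p s"
      unfolding PP_def
    proof (rule prod.cong[OF refl])
      fix i assume i: "i \<in> I - {i0}"
      show "(\<Prod>j\<in>{j\<in>I. i < j}. fq Q (pt Q w ((p(i0:=k)) i) ((s(i0:=e)) i)) (pt Q w ((p(i0:=k)) j) ((s(i0:=e)) j))) =
          (\<Prod>j\<in>{j\<in>I-{i0}. i < j}. fq Q (pt Q w (p i) (s i)) (pt Q w (p j) (s j)))"
        unfolding B[OF i] by (rule prod.cong) (use i in auto)
    qed
    show ?thesis unfolding X Y ..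
  qed
  finally show ?thesis .
qed

lemma fq_sym:
  assumes "Q \<noteq> 0" "y \<noteq> 0" "x \<noteq> y" "1 - Q*x*y \<noteq> 0"
  shows "fq Q x (1/(Q*y)) = fq Q x y"
proof -
  have e1: "x - Q*(1/(Q*y)) = (x*y - 1)/y" using assms by (simp add: field_simps)
  have e2: "x - 1/(Q*y) = (Q*x*y - 1)/(Q*y)" using assms by (simp add: field_simps)
  have e3: "1 - x*(1/(Q*y)) = (Q*y - x)/(Q*y)" using assms by (simp add: field_simps)
  have e4: "1 - Q*x*(1/(Q*y)) = (y - x)/y" using assms by (simp add: field_simps)
  have n: "x - y \<noteq> 0" "y - x \<noteq> 0" "Q*x*y - 1 \<noteq> 0" using assms by auto
  show ?thesis unfolding fq_def e1 e2 e3 e4 using n assms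
    by (simp add: divide_simps) (simp add: algebra_simps)
qed

lemma prod_reduce:
  assumes "good Q w M" "k \<in> M" "(p, s) \<in> SP J (M - {k})"
  shows "(\<Prod>j\<in>J. fq Q (pt Q w k e) (pt Q w (p j) (s j))) = (\<Prod>m\<in>M-{k}. fq Q (pt Q w k e) (w m))"
proof -
  have b: "bij_betw p J (M - {k})" using assms(3) unfolding SP_def by auto
  have "(\<Prod>j\<in>J. fq Q (pt Q w k e) (pt Q w (p j) (s j))) = (\<Prod>j\<in>J. fq Q (pt Q w k e) (w (p j)))"
  proof (rule prod.cong[OF refl])
    fix j assume j: "j \<in> J"
    have m: "p j \<in> M" "p j \<noteq> k" using bij_betw_apply[OF b j] by auto
    have x: "pt Q w k e = w k \<or> pt Q w k e = 1/(Q * w k)" unfolding pt_def by auto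
    note pp = pts_pair[OF assms(1,2) m(1) m(2)[symmetric] x]
    have "w (p j) \<noteq> 0" using good_1[OF assms(1) m(1)] by simp
    then show "fq Q (pt Q w k e) (pt Q w (p j) (s j)) = fq Q (pt Q w k e) (w (p j))"
      unfolding pt_def[of Q w "p j"] using fq_sym[OF good_Q[OF assms(1)] _ pp(1) pp(3)] by auto
  qed
  also have "\<dots> = (\<Prod>m\<in>M-{k}. fq Q (pt Q w k e) (w m))"
    by (rule prod.reindex_bij_betw[OF b])
  finally show ?thesis .
qed

lemma DEC:
  assumes "finite I" "finite M" "i0 \<in> I" "\<forall>i\<in>I. i0 \<le> i" "good Q w M"
  shows "(\<Sum>x\<in>SP I M. H (pt Q w (fst x i0) (snd x i0)) * PP Q w I (fst x) (snd x)) =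
    (\<Sum>k\<in>M. \<Sum>e\<in>(UNIV::bool set). H (pt Q w k e) * (\<Prod>m\<in>M-{k}. fq Q (pt Q w k e) (w m)) * TT Q w (I-{i0}) (M-{k}))"
  unfolding SP_split[OF assms(1-3)]
proof (intro sum.cong refl)
  fix k e assume k: "k \<in> M"
  show "(\<Sum>y\<in>SP (I-{i0}) (M-{k}). H (pt Q w (fst ((fst y)(i0:=k), (snd y)(i0:=e)) i0) (snd ((fst y)(i0:=k), (snd y)(i0:=e)) i0))
        * PP Q w I (fst ((fst y)(i0:=k), (snd y)(i0:=e))) (snd ((fst y)(i0:=k), (snd y)(i0:=e))))
      = H (pt Q w k e) * (\<Prod>m\<in>M-{k}. fq Q (pt Q w k e) (w m)) * TT Q w (I-{i0}) (M-{k})"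
    unfolding TT_def sum_distrib_left
  proof (rule sum.cong[OF refl])
    fix y assume y: "y \<in> SP (I-{i0}) (M-{k})"
    have y': "(fst y, snd y) \<in> SP (I-{i0}) (M-{k})" using y by simp
    show "H (pt Q w (fst ((fst y)(i0:=k), (snd y)(i0:=e)) i0) (snd ((fst y)(i0:=k), (snd y)(i0:=e)) i0))
        * PP Q w I (fst ((fst y)(i0:=k), (snd y)(i0:=e))) (snd ((fst y)(i0:=k), (snd y)(i0:=e)))
      = H (pt Q w k e) * (\<Prod>m\<in>M-{k}. fq Q (pt Q w k e) (w m)) * PP Q w (I-{i0}) (fst y) (snd y)"
      using PP_split[OF assms(1,3,4), where p="fst y" and k=k and s="snd y" and e=e and Q=Q and w=w]
        prod_reduce[OF assms(5) k y', of e]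
      by simp
  qed
qed



definition VQ :: "complex \<Rightarrow> nat \<Rightarrow> complex" where
  "VQ Q n = Q ^ (n choose 2) * (1 - Q) ^ n / (\<Prod>i = 1..n. (1 - Q ^ i) * (1 + Q ^ (i - 1)))"

lemma VQ_real: "VQ (of_real q) n = of_real (V_const q n)"
  unfolding VQ_def V_const_def by simp

lemma qpow_ne1:
  fixes q :: real
  assumes "q > 0" "q \<noteq> 1" "i > 0"
  shows "(of_real q :: complex) ^ i \<noteq> 1" "1 - (of_real q :: complex) ^ i \<noteq> 0"
proof -
  have "q ^ i \<noteq> 1" using power_eq_iff_eq_base[OF assms(3), of q 1] assms(1,2) by simp
  then show "(of_real q :: complex) ^ i \<noteq> 1"
    by (metis of_real_eq_1_iff of_real_power)
  then show "1 - (of_real q :: complex) ^ i \<noteq> 0" by simp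
qed

lemma qpow_ne_m1:
  fixes q :: real
  assumes "q > 0"
  shows "1 + (of_real q :: complex) ^ i \<noteq> 0"
proof -
  have "1 + q ^ i > 0" using assms by (simp add: add_pos_nonneg)
  then have "of_real (1 + q ^ i) \<noteq> (0::complex)" by (simp only: of_real_eq_0_iff)
  then show ?thesis by simp
qed

lemma VQ_nz:
  fixes q :: real
  assumes "q > 0" "q \<noteq> 1"
  shows "VQ (of_real q) n \<noteq> 0"
proof -
  have "(\<Prod>i = 1..n. (1 - (of_real q :: complex) ^ i) * (1 + (of_real q) ^ (i - 1))) \<noteq> 0"
    using qpow_ne1[OF assms] qpow_ne_m1[OF assms(1)] by (auto simp: prod_zero_iff)
  moreover have "(of_real q :: complex) \<noteq> 0" "1 - (of_real q :: complex) \<noteq> 0" using assms by auto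
  ultimately show ?thesis unfolding VQ_def by simp
qed

lemma VQ_Suc:
  fixes q :: real
  assumes "q > 0" "q \<noteq> 1"
  defines "Q \<equiv> (of_real q :: complex)"
  shows "1 / VQ Q n * (((1/Q)^Suc n - Q^Suc n)/(1-Q) + 1 - (1/Q)^Suc n) = 1 / VQ Q (Suc n)"
proof -
  have Q0: "Q \<noteq> 0" "1 - Q \<noteq> 0" unfolding Q_def using assms(1,2) by auto
  define z where "z = Q ^ n"
  have z0: "z \<noteq> 0" unfolding z_def using Q0 by simp
  have a: "1 - Q * z \<noteq> 0" "1 + z \<noteq> 0"
    unfolding z_def Q_def using qpow_ne1(2)[OF assms(1,2), of "Suc n"] qpow_ne_m1[OF assms(1), of n] by auto
  have P: "(\<Prod>i = 1..Suc n. (1 - Q ^ i) * (1 + Q ^ (i - 1))) =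
     (\<Prod>i = 1..n. (1 - Q ^ i) * (1 + Q ^ (i - 1))) * ((1 - Q * z) * (1 + z))"
    unfolding z_def by simp
  have V: "VQ Q (Suc n) = VQ Q n * (z * (1 - Q)) / ((1 - Q * z) * (1 + z))"
  proof -
    have ch: "Suc n choose 2 = n + (n choose 2)" using binomial_Suc_Suc[of n 1] by (simp add: numeral_2_eq_2)
    show ?thesis unfolding VQ_def P ch by (simp add: z_def power_add mult_ac)
  qed
  have c: "((1/Q)^Suc n - Q^Suc n)/(1-Q) + 1 - (1/Q)^Suc n = (1 - Q*z)*(1+z)/(z*(1-Q))"
  proof -
    have e: "(1/Q)^Suc n = 1/(Q*z)" "Q^Suc n = Q*z" unfolding z_def by (simp_all add: power_divide)
    show ?thesis unfolding e using Q0 z0 a by (simp add: divide_simps) (simp add: algebra_simps)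
  qed
  have Vn: "VQ Q n \<noteq> 0" unfolding Q_def by (rule VQ_nz[OF assms(1,2)])
  show ?thesis unfolding c V using Vn Q0 z0 a by (simp add: field_simps)
qed


lemma SP_empty: "SP {} {} = {(\<lambda>i. i, \<lambda>i. False)}"
  unfolding SP_def by (auto simp: fun_eq_iff bij_betw_def)

lemma sum_bool: "(\<Sum>e\<in>(UNIV::bool set). f e) = f False + f True"
  by (simp add: UNIV_bool)

lemma T_thm:
  fixes q :: real
  assumes q: "q > 0" "q \<noteq> 1"
  shows "finite I \<Longrightarrow> finite M \<Longrightarrow> card I = card M \<Longrightarrow> good (of_real q) w M \<Longrightarrow>
    TT (of_real q) w I M = 1 / VQ (of_real q) (card M)"
proof (induction "card M" arbitrary: I M)
  case 0
  then have "I = {}" "M = {}" by auto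
  then show ?case by (simp add: TT_def VQ_def SP_empty PP_def numeral_2_eq_2)
next
  case (Suc n)
  define Q where "Q = (of_real q :: complex)"
  have Q1: "Q \<noteq> 1" unfolding Q_def using q by simp
  have "I \<noteq> {}" using Suc.hyps(2) Suc.prems(3) by auto
  define i0 where "i0 = Min I"
  have i0: "i0 \<in> I" "\<forall>i\<in>I. i0 \<le> i" unfolding i0_def using Suc.prems(1) \<open>I \<noteq> {}\<close> by auto
  have IH: "TT Q w (I - {i0}) (M - {k}) = 1 / VQ Q n" if k: "k \<in> M" for k
  proof -
    have c: "card (M - {k}) = n" "card (I - {i0}) = n" using Suc.hyps(2) Suc.prems(3) k i0(1) Suc.prems(1,2) by auto
    have "TT Q w (I - {i0}) (M - {k}) = 1 / VQ Q (card (M - {k}))"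
      unfolding Q_def by (rule Suc.hyps(1)) (use c Suc.prems good_mono in auto)
    then show ?thesis using c by simp
  qed
  have "TT Q w I M = (\<Sum>x\<in>SP I M. (\<lambda>_. 1) (pt Q w (fst x i0) (snd x i0)) * PP Q w I (fst x) (snd x))"
    unfolding TT_def by simp
  also have "\<dots> = (\<Sum>k\<in>M. \<Sum>e\<in>(UNIV::bool set). 1 * (\<Prod>m\<in>M-{k}. fq Q (pt Q w k e) (w m)) * TT Q w (I-{i0}) (M-{k}))"
    by (rule DEC[OF Suc.prems(1,2) i0]) (use Suc.prems(4) Q_def in simp)
  also have "\<dots> = (\<Sum>k\<in>M. ((\<Prod>j\<in>M-{k}. fq Q (w k) (w j)) + (\<Prod>j\<in>M-{k}. fq Q (1/(Q * w k)) (w j))) * (1 / VQ Q n))"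
    by (rule sum.cong[OF refl]) (simp add: sum_bool IH pt_def algebra_simps)
  also have "\<dots> = 1 / VQ Q n * (\<Sum>k\<in>M. (\<Prod>j\<in>M-{k}. fq Q (w k) (w j)) + (\<Prod>j\<in>M-{k}. fq Q (1/(Q * w k)) (w j)))"
    by (simp add: sum_distrib_left mult.commute)
  also have "\<dots> = 1 / VQ Q n * (((1/Q)^card M - Q^card M)/(1-Q) + 1 - (1/Q)^card M)"
    using B0_full[OF Suc.prems(2) _ Q1] Suc.prems(4) Q_def by simp
  also have "\<dots> = 1 / VQ Q (card M)"
    unfolding Suc.hyps(2)[symmetric] Q_def by (rule VQ_Suc[OF q])
  finally show ?case unfolding Q_def .
qed


theorem lemma6p5:
  fixes q \<alpha> :: real and N :: nat and w :: "nat \<Rightarrow> complex"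
  assumes "q > 0" and "q \<noteq> 1" and "\<alpha> \<ge> 0" and "N > 0"
    and "\<And>k. k \<in> {1..N} \<Longrightarrow> w k \<noteq> 0 \<and> w k \<noteq> 1 \<and> of_real q * w k \<noteq> 1
                              \<and> of_real q * (w k)^2 \<noteq> 1"
    and "\<And>i j. i \<in> {1..N} \<Longrightarrow> j \<in> {1..N} \<Longrightarrow> i \<noteq> j \<Longrightarrow>
                 w i \<noteq> w j \<and> of_real q * w i * w j \<noteq> 1"
  shows "F1 q \<alpha> N w = of_real (\<alpha> ^ (N - 1)) *
           (\<Sum>k = 1..N. (1 - of_real q)^2 * w k / ((1 - w k) * (1 - of_real q * w k)))"
proof -
  define Q where "Q = (of_real q :: complex)"
  define A where "A = (of_real \<alpha> :: complex)"
  have Q0: "Q \<noteq> 0" "Q \<noteq> 1" unfolding Q_def using assms(1,2) by auto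
  have g1: "\<forall>k\<in>{1..N}. w k \<noteq> 0 \<and> w k \<noteq> 1 \<and> Q * w k \<noteq> 1 \<and> Q * (w k)^2 \<noteq> 1"
    unfolding Q_def by (intro ballI assms(5))
  have g2: "\<forall>i\<in>{1..N}. \<forall>j\<in>{1..N}. i \<noteq> j \<longrightarrow> w i \<noteq> w j \<and> Q * w i * w j \<noteq> 1"
    unfolding Q_def by (intro ballI impI assms(6))
  have good: "good Q w {1..N}"
    unfolding good_def by (rule conjI[OF Q0(1) conjI[OF g1 g2]])
  have sp: "signed_perms N = SP {1..N} {1..N}"
  proof (intro set_eqI iffI)
    fix x assume "x \<in> signed_perms N"
    then obtain p s where x: "x = (p, s)" "p permutes {1..N}" "\<forall>k. k \<notin> {1..N} \<longrightarrow> \<not> s k"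
      unfolding signed_perms_def by auto
    have "bij_betw p {1..N} {1..N}" by (rule permutes_imp_bij[OF x(2)])
    moreover have "\<forall>i. i \<notin> {1..N} \<longrightarrow> p i = i" using permutes_not_in[OF x(2)] by blast
    ultimately show "x \<in> SP {1..N} {1..N}" unfolding SP_def x(1) using x(3) by blast
  next
    fix x assume "x \<in> SP {1..N} {1..N}"
    then obtain p s where x: "x = (p, s)" "bij_betw p {1..N} {1..N}" "\<forall>i. i \<notin> {1..N} \<longrightarrow> p i = i"
       "\<forall>k. k \<notin> {1..N} \<longrightarrow> \<not> s k"
      unfolding SP_def by auto
    have "p permutes {1..N}" by (rule bij_imp_permutes[OF x(2)]) (use x(3) in blast)
    then show "x \<in> signed_perms N" unfolding signed_perms_def x(1) using x(4) by blast
  qed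
  have fs: "F_summand q \<alpha> N (signed_var q w p s) = phiQ Q A (pt Q w (p 1) (s 1)) * PP Q w {1..N} p s" for p s
  proof -
    have sv: "signed_var q w p s = (\<lambda>k. pt Q w (p k) (s k))"
      unfolding signed_var_def pt_def Q_def by (simp add: fun_eq_iff)
    have "(\<Prod>i\<in>{1..N}. \<Prod>j\<in>{i+1..N}.
        (pt Q w (p i) (s i) - Q * pt Q w (p j) (s j)) / (pt Q w (p i) (s i) - pt Q w (p j) (s j)) *
        ((1 - pt Q w (p i) (s i) * pt Q w (p j) (s j)) / (1 - Q * pt Q w (p i) (s i) * pt Q w (p j) (s j))))
      = PP Q w {1..N} p s"
      unfolding PP_def fq_def
    proof (rule prod.cong[OF refl])
      fix i assume i: "i \<in> {1..N}"
      have "{i+1..N} = {j\<in>{1..N}. i < j}" using i by auto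
      then show "(\<Prod>j\<in>{i+1..N}.
        (pt Q w (p i) (s i) - Q * pt Q w (p j) (s j)) / (pt Q w (p i) (s i) - pt Q w (p j) (s j)) *
        ((1 - pt Q w (p i) (s i) * pt Q w (p j) (s j)) / (1 - Q * pt Q w (p i) (s i) * pt Q w (p j) (s j))))
       = (\<Prod>j\<in>{j\<in>{1..N}. i < j}.
        (pt Q w (p i) (s i) - Q * pt Q w (p j) (s j)) / (pt Q w (p i) (s i) - pt Q w (p j) (s j)) *
        ((1 - pt Q w (p i) (s i) * pt Q w (p j) (s j)) / (1 - Q * pt Q w (p i) (s i) * pt Q w (p j) (s j))))"
        by simp
    qed
    moreover have "phi1 q \<alpha> (pt Q w (p 1) (s 1)) = phiQ Q A (pt Q w (p 1) (s 1))"
      unfolding phi1_def phiQ_def Q_def A_def ..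
    ultimately show ?thesis unfolding F_summand_def sv Q_def by simp
  qed
  have i0: "1 \<in> {1..N}" "\<forall>i\<in>{1..N}. 1 \<le> i" using assms(4) by auto
  have TT1: "TT Q w ({1..N} - {1}) ({1..N} - {k}) = 1 / VQ Q (N - 1)" if k: "k \<in> {1..N}" for k
  proof -
    have c: "card ({1..N} - {k}) = N - 1" "card ({1..N} - {1::nat}) = N - 1" using k i0 by auto
    show ?thesis unfolding Q_def using T_thm[OF assms(1,2), of "{1..N} - {1}" "{1..N} - {k}" w] c good good_mono Q_def
      by auto
  qed
  have "(\<Sum>(p, s)\<in>signed_perms N. F_summand q \<alpha> N (signed_var q w p s))
      = (\<Sum>x\<in>SP {1..N} {1..N}. phiQ Q A (pt Q w (fst x 1) (snd x 1)) * PP Q w {1..N} (fst x) (snd x))"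
    unfolding sp by (rule sum.cong[OF refl]) (simp add: fs split_beta)
  also have "\<dots> = (\<Sum>k\<in>{1..N}. \<Sum>e\<in>(UNIV::bool set). phiQ Q A (pt Q w k e) * (\<Prod>m\<in>{1..N}-{k}. fq Q (pt Q w k e) (w m))
        * TT Q w ({1..N}-{1}) ({1..N}-{k}))"
    by (rule DEC[OF _ _ i0 good]) auto
  also have "\<dots> = (\<Sum>k\<in>{1..N}. (phiQ Q A (w k) * (\<Prod>j\<in>{1..N}-{k}. fq Q (w k) (w j))
      + phiQ Q A (1/(Q * w k)) * (\<Prod>j\<in>{1..N}-{k}. fq Q (1/(Q * w k)) (w j))) * (1 / VQ Q (N - 1)))"
  proof (rule sum.cong[OF refl])
    fix k assume k: "k \<in> {1..N}"
    show "(\<Sum>e\<in>(UNIV::bool set). phiQ Q A (pt Q w k e) * (\<Prod>m\<in>{1..N}-{k}. fq Q (pt Q w k e) (w m))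
        * TT Q w ({1..N}-{1}) ({1..N}-{k})) = (phiQ Q A (w k) * (\<Prod>j\<in>{1..N}-{k}. fq Q (w k) (w j))
      + phiQ Q A (1/(Q * w k)) * (\<Prod>j\<in>{1..N}-{k}. fq Q (1/(Q * w k)) (w j))) * (1 / VQ Q (N - 1))"
      unfolding sum_bool TT1[OF k] pt_def by (simp add: algebra_simps)
  qed
  also have "\<dots> = 1 / VQ Q (N - 1) * (\<Sum>k\<in>{1..N}. phiQ Q A (w k) * (\<Prod>j\<in>{1..N}-{k}. fq Q (w k) (w j))
      + phiQ Q A (1/(Q * w k)) * (\<Prod>j\<in>{1..N}-{k}. fq Q (1/(Q * w k)) (w j)))"
    by (simp add: sum_distrib_left mult.commute)
  also have "\<dots> = 1 / VQ Q (N - 1) * (\<Sum>k\<in>{1..N}. (1 - Q)^2 * w k / ((1 - w k) * (1 - Q * w k)))"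
    using B1_full[OF _ good Q0(2), of A] by simp
  finally have S: "(\<Sum>(p, s)\<in>signed_perms N. F_summand q \<alpha> N (signed_var q w p s))
     = 1 / VQ Q (N - 1) * (\<Sum>k\<in>{1..N}. (1 - Q)^2 * w k / ((1 - w k) * (1 - Q * w k)))" .
  have V: "of_real (V_const q (N - 1)) = VQ Q (N - 1)" unfolding Q_def by (rule VQ_real[symmetric])
  have Vnz: "VQ Q (N - 1) \<noteq> 0" unfolding Q_def by (rule VQ_nz[OF assms(1,2)])
  show ?thesis unfolding F1_def S using V Vnz by (simp add: Q_def)
qed


end
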